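(* Let $n \ge 1$, let $F$ be an $n$-perturbation on $H^2(\mathbb{D})$ and $S_n = M_z + F$. If $\mathcal{M} \subseteq H^2(\mathbb{D})$ is a nonzero closed subspace with $S_n\mathcal{M}\subseteq\mathcal{M}$, then $\dim(\mathcal{M} \ominus S_n \mathcal{M}) = 1$.
   Context: $H^2(\mathbb{D})$ is the Hardy space on the open unit disc and $M_z$ the unilateral shift on it. All operators are bounded. A linear operator $F$ on $H^2(\mathbb{D})$ is an $n$-perturbation if (a) $Fz^m = 0$ for all $m \ge n$; (b) $F(z^m H^2(\mathbb{D})) \subseteq z^{m+1}\mathbb{C}[z]$ for all $m \ge 0$; and (c) $M_z + F$ is left-invertible. *)

theory Defs
  imports "HOL-Analysis.Analysis"
begin

text \<open>The Hardy space H^2(D) is modelled via the canonical unitary identification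
  f = sum a_k z^k  <->  (a_k), i.e. as the space of square-summable complex
  coefficient sequences, with the inner product of H^2.\<close>

definition H2 :: "(nat \<Rightarrow> complex) set" where
  "H2 = {a. summable (\<lambda>k. (cmod (a k))\<^sup>2)}"

definition h2_inner :: "(nat \<Rightarrow> complex) \<Rightarrow> (nat \<Rightarrow> complex) \<Rightarrow> complex" where
  "h2_inner a b = (\<Sum>k. a k * cnj (b k))"

definition h2_norm :: "(nat \<Rightarrow> complex) \<Rightarrow> real" where
  "h2_norm a = sqrt (\<Sum>k. (cmod (a k))\<^sup>2)"

definition zpow :: "nat \<Rightarrow> nat \<Rightarrow> complex" where
  "zpow m = (\<lambda>k. if k = m then 1 else 0)"

definition Mz :: "(nat \<Rightarrow> complex) \<Rightarrow> nat \<Rightarrow> complex" where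
  "Mz a = (\<lambda>k. if k = 0 then 0 else a (k - 1))"

text \<open>Bounded linear operators on H^2 (only their values on H^2 matter).\<close>
definition bounded_op :: "((nat \<Rightarrow> complex) \<Rightarrow> nat \<Rightarrow> complex) \<Rightarrow> bool" where
  "bounded_op T \<longleftrightarrow>
     (\<forall>x\<in>H2. T x \<in> H2) \<and>
     (\<forall>x\<in>H2. \<forall>y\<in>H2. T (\<lambda>k. x k + y k) = (\<lambda>k. T x k + T y k)) \<and>
     (\<forall>c. \<forall>x\<in>H2. T (\<lambda>k. c * x k) = (\<lambda>k. c * T x k)) \<and>
     (\<exists>C. \<forall>x\<in>H2. h2_norm (T x) \<le> C * h2_norm x)"

definition left_invertible :: "((nat \<Rightarrow> complex) \<Rightarrow> nat \<Rightarrow> complex) \<Rightarrow> bool" where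
  "left_invertible T \<longleftrightarrow> (\<exists>L. bounded_op L \<and> (\<forall>x\<in>H2. L (T x) = x))"

text \<open>z^m H^2: elements vanishing below degree m.  z^(m+1) C[z]: polynomials
  vanishing below degree m+1.\<close>
definition zpow_H2 :: "nat \<Rightarrow> (nat \<Rightarrow> complex) set" where
  "zpow_H2 m = {x \<in> H2. \<forall>k<m. x k = 0}"

definition zpow_poly :: "nat \<Rightarrow> (nat \<Rightarrow> complex) set" where
  "zpow_poly m = {x. (\<forall>k<m. x k = 0) \<and> (\<exists>N. \<forall>k\<ge>N. x k = 0)}"

definition n_perturbation :: "nat \<Rightarrow> ((nat \<Rightarrow> complex) \<Rightarrow> nat \<Rightarrow> complex) \<Rightarrow> bool" where
  "n_perturbation n F \<longleftrightarrow>
     bounded_op F \<and>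
     (\<forall>m\<ge>n. F (zpow m) = (\<lambda>_. 0)) \<and>
     (\<forall>m. F ` zpow_H2 m \<subseteq> zpow_poly (m + 1)) \<and>
     left_invertible (\<lambda>x. (\<lambda>k. Mz x k + F x k))"

definition closed_subspace :: "(nat \<Rightarrow> complex) set \<Rightarrow> bool" where
  "closed_subspace M \<longleftrightarrow>
     M \<subseteq> H2 \<and> (\<lambda>_. 0) \<in> M \<and>
     (\<forall>x\<in>M. \<forall>y\<in>M. (\<lambda>k. x k + y k) \<in> M) \<and>
     (\<forall>c. \<forall>x\<in>M. (\<lambda>k. c * x k) \<in> M) \<and>
     (\<forall>s x. (\<forall>j. s j \<in> M) \<and> x \<in> H2 \<and>
        (\<lambda>j. h2_norm (\<lambda>k. s j k - x k)) \<longlonglongrightarrow> 0 \<longrightarrow> x \<in> M)"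

definition orth_diff :: "(nat \<Rightarrow> complex) set \<Rightarrow> (nat \<Rightarrow> complex) set \<Rightarrow> (nat \<Rightarrow> complex) set" where
  "orth_diff M N = {x \<in> M. \<forall>y\<in>N. h2_inner x y = 0}"

definition dim_one :: "(nat \<Rightarrow> complex) set \<Rightarrow> bool" where
  "dim_one V \<longleftrightarrow> (\<exists>e. e \<noteq> (\<lambda>_. 0) \<and> V = {(\<lambda>k. c * e k) | c. True})"

end

theory Submission
  imports Defs
begin


definition nsq :: "(nat \<Rightarrow> complex) \<Rightarrow> real" where
  "nsq x = (\<Sum>k. (cmod (x k))\<^sup>2)"

lemma h2_norm_nsq: "h2_norm x = sqrt (nsq x)"
  by (simp add: h2_norm_def nsq_def)

lemma H2_iff: "x \<in> H2 \<longleftrightarrow> summable (\<lambda>k. (cmod (x k))\<^sup>2)"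
  by (simp add: H2_def)

lemma cmod_add_sq_le: "(cmod (a + b))\<^sup>2 \<le> 2 * (cmod a)\<^sup>2 + 2 * (cmod b)\<^sup>2"
proof -
  have "cmod (a + b) \<le> cmod a + cmod b" by (rule norm_triangle_ineq)
  hence "(cmod (a + b))\<^sup>2 \<le> (cmod a + cmod b)\<^sup>2"
    by (simp add: power_mono)
  also have "\<dots> \<le> 2 * (cmod a)\<^sup>2 + 2 * (cmod b)\<^sup>2"
  proof -
    have "0 \<le> (cmod a - cmod b)\<^sup>2" by simp
    thus ?thesis unfolding power2_sum power2_diff by linarith
  qed
  finally show ?thesis .
qed

lemma H2_add: "x \<in> H2 \<Longrightarrow> y \<in> H2 \<Longrightarrow> (\<lambda>k. x k + y k) \<in> H2"
  unfolding H2_iff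
proof -
  assume a: "summable (\<lambda>k. (cmod (x k))\<^sup>2)" "summable (\<lambda>k. (cmod (y k))\<^sup>2)"
  have "summable (\<lambda>k. 2 * (cmod (x k))\<^sup>2 + 2 * (cmod (y k))\<^sup>2)"
    using a by (intro summable_add summable_mult) auto
  then show "summable (\<lambda>k. (cmod (x k + y k))\<^sup>2)"
    by (rule summable_comparison_test') (auto simp: cmod_add_sq_le)
qed

lemma H2_smult: "x \<in> H2 \<Longrightarrow> (\<lambda>k. c * x k) \<in> H2"
  unfolding H2_iff by (simp add: norm_mult power_mult_distrib summable_mult)

lemma H2_diff: "x \<in> H2 \<Longrightarrow> y \<in> H2 \<Longrightarrow> (\<lambda>k. x k - y k) \<in> H2"
proof -
  assume "x \<in> H2" "y \<in> H2"
  hence "(\<lambda>k. x k + (-1) * y k) \<in> H2" by (intro H2_add H2_smult)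
  thus ?thesis by simp
qed

lemma H2_zero: "(\<lambda>_. 0) \<in> H2"
  unfolding H2_iff by simp

lemma H2_fin: "(\<And>k. k \<ge> N \<Longrightarrow> x k = 0) \<Longrightarrow> x \<in> H2"
  unfolding H2_iff
  by (rule summable_finite[of "{..<N}"]) auto

lemma zpow_H2: "zpow m \<in> H2"
  by (rule H2_fin[of "Suc m"]) (auto simp: zpow_def)

lemma inn_summable: "x \<in> H2 \<Longrightarrow> y \<in> H2 \<Longrightarrow> summable (\<lambda>k. x k * cnj (y k))"
proof -
  assume a: "x \<in> H2" "y \<in> H2"
  have "summable (\<lambda>k. (cmod (x k))\<^sup>2 + (cmod (y k))\<^sup>2)"
    using a by (intro summable_add) (auto simp: H2_iff)
  then show ?thesis
  proof (rule summable_comparison_test')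
    fix k
    have "0 \<le> (cmod (x k) - cmod (y k))\<^sup>2" by simp
    moreover have "(cmod (x k) - cmod (y k))\<^sup>2 = (cmod (x k))\<^sup>2 - 2 * (cmod (x k) * cmod (y k)) + (cmod (y k))\<^sup>2"
      by (simp add: power2_diff)
    moreover have "0 \<le> cmod (x k) * cmod (y k)" by simp
    moreover have "norm (x k * cnj (y k)) = cmod (x k) * cmod (y k)" by (simp add: norm_mult)
    ultimately show "norm (x k * cnj (y k)) \<le> (cmod (x k))\<^sup>2 + (cmod (y k))\<^sup>2"
      by linarith
  qed
qed

lemma inn_add_left: "x \<in> H2 \<Longrightarrow> y \<in> H2 \<Longrightarrow> z \<in> H2 \<Longrightarrow>
   h2_inner (\<lambda>k. x k + y k) z = h2_inner x z + h2_inner y z"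
  unfolding h2_inner_def
  by (simp add: distrib_right suminf_add[symmetric] inn_summable)

lemma inn_diff_left: "x \<in> H2 \<Longrightarrow> y \<in> H2 \<Longrightarrow> z \<in> H2 \<Longrightarrow>
   h2_inner (\<lambda>k. x k - y k) z = h2_inner x z - h2_inner y z"
  unfolding h2_inner_def
  by (simp add: left_diff_distrib suminf_diff[symmetric] inn_summable)

lemma inn_smult_left: "x \<in> H2 \<Longrightarrow> y \<in> H2 \<Longrightarrow>
   h2_inner (\<lambda>k. c * x k) y = c * h2_inner x y"
  unfolding h2_inner_def
  by (simp add: mult.assoc suminf_mult[symmetric] inn_summable)

lemma inn_cnj: "x \<in> H2 \<Longrightarrow> y \<in> H2 \<Longrightarrow> h2_inner y x = cnj (h2_inner x y)"
proof -
  assume a: "x \<in> H2" "y \<in> H2"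
  have "(\<lambda>k. x k * cnj (y k)) sums h2_inner x y"
    using inn_summable[OF a] by (simp add: h2_inner_def summable_sums)
  hence "(\<lambda>k. cnj (x k * cnj (y k))) sums cnj (h2_inner x y)"
    by (simp only: sums_cnj)
  hence "(\<lambda>k. y k * cnj (x k)) sums cnj (h2_inner x y)"
    by (simp add: mult.commute)
  hence "cnj (h2_inner x y) = (\<Sum>k. y k * cnj (x k))" by (rule sums_unique)
  thus ?thesis unfolding h2_inner_def[of y x] by simp
qed

lemma inn_add_right: "x \<in> H2 \<Longrightarrow> y \<in> H2 \<Longrightarrow> z \<in> H2 \<Longrightarrow>
   h2_inner z (\<lambda>k. x k + y k) = h2_inner z x + h2_inner z y"
  by (simp add: inn_cnj[of _ z] H2_add inn_add_left)

lemma inn_diff_right: "x \<in> H2 \<Longrightarrow> y \<in> H2 \<Longrightarrow> z \<in> H2 \<Longrightarrow>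
   h2_inner z (\<lambda>k. x k - y k) = h2_inner z x - h2_inner z y"
  by (simp add: inn_cnj[of _ z] H2_diff inn_diff_left)

lemma inn_smult_right: "x \<in> H2 \<Longrightarrow> y \<in> H2 \<Longrightarrow>
   h2_inner y (\<lambda>k. c * x k) = cnj c * h2_inner y x"
  by (simp add: inn_cnj[of _ y] H2_smult inn_smult_left)

lemma inn_self: "x \<in> H2 \<Longrightarrow> h2_inner x x = complex_of_real (nsq x)"
proof -
  assume a: "x \<in> H2"
  have eq: "(\<lambda>k. x k * cnj (x k)) = (\<lambda>k. complex_of_real ((cmod (x k))\<^sup>2))"
    by (simp only: complex_norm_square)
  have "h2_inner x x = (\<Sum>k. complex_of_real ((cmod (x k))\<^sup>2))"
    by (simp only: h2_inner_def eq)
  moreover have "(\<Sum>k. complex_of_real ((cmod (x k))\<^sup>2)) = complex_of_real (\<Sum>k. (cmod (x k))\<^sup>2)"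
    using a unfolding H2_iff by (rule suminf_of_real[symmetric])
  ultimately show ?thesis unfolding nsq_def by (simp only:)
qed

lemma nsq_inn: "x \<in> H2 \<Longrightarrow> nsq x = Re (h2_inner x x)"
  by (simp add: inn_self)

lemma nsq_nonneg: "x \<in> H2 \<Longrightarrow> nsq x \<ge> 0"
  unfolding nsq_def H2_iff by (simp add: suminf_nonneg)



lemma nsq_add: "x \<in> H2 \<Longrightarrow> y \<in> H2 \<Longrightarrow>
  nsq (\<lambda>k. x k + y k) = nsq x + nsq y + 2 * Re (h2_inner x y)"
proof -
  assume a: "x \<in> H2" "y \<in> H2"
  have "nsq (\<lambda>k. x k + y k) = Re (h2_inner (\<lambda>k. x k + y k) (\<lambda>k. x k + y k))"
    using a by (simp add: nsq_inn H2_add)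
  also have "\<dots> = Re (h2_inner x x + h2_inner x y + (h2_inner y x + h2_inner y y))"
    using a by (simp add: inn_add_left inn_add_right H2_add)
  also have "\<dots> = nsq x + nsq y + 2 * Re (h2_inner x y)"
    using a by (simp add: nsq_inn inn_cnj[of x y])
  finally show ?thesis .
qed

lemma nsq_diff: "x \<in> H2 \<Longrightarrow> y \<in> H2 \<Longrightarrow>
  nsq (\<lambda>k. x k - y k) = nsq x + nsq y - 2 * Re (h2_inner x y)"
proof -
  assume a: "x \<in> H2" "y \<in> H2"
  have "nsq (\<lambda>k. x k - y k) = Re (h2_inner (\<lambda>k. x k - y k) (\<lambda>k. x k - y k))"
    using a by (simp add: nsq_inn H2_diff)
  also have "\<dots> = Re (h2_inner x x - h2_inner x y - (h2_inner y x - h2_inner y y))"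
    using a by (simp add: inn_diff_left inn_diff_right H2_diff)
  also have "\<dots> = nsq x + nsq y - 2 * Re (h2_inner x y)"
    using a by (simp add: nsq_inn inn_cnj[of x y])
  finally show ?thesis .
qed

lemma nsq_smult: "x \<in> H2 \<Longrightarrow> nsq (\<lambda>k. c * x k) = (cmod c)\<^sup>2 * nsq x"
  unfolding nsq_def H2_iff by (simp add: norm_mult power_mult_distrib suminf_mult)

lemma nsq_eq0: "x \<in> H2 \<Longrightarrow> nsq x = 0 \<longleftrightarrow> x = (\<lambda>_. 0)"
  unfolding nsq_def H2_iff by (simp add: suminf_eq_zero_iff fun_eq_iff)

lemma coord_le: "x \<in> H2 \<Longrightarrow> (cmod (x k))\<^sup>2 \<le> nsq x"
  unfolding nsq_def H2_iff
  using sum_le_suminf[of "\<lambda>k. (cmod (x k))\<^sup>2" "{k}"] by simp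

lemma inn_zero_right: "h2_inner x (\<lambda>_. 0) = 0"
  by (simp add: h2_inner_def)

lemma inn_zero_left: "h2_inner (\<lambda>_. 0) x = 0"
  by (simp add: h2_inner_def)

lemma key_sub:
  assumes a: "d \<in> H2" "w \<in> H2" and nw: "nsq w \<noteq> 0"
  shows "nsq (\<lambda>k. d k - (h2_inner d w / complex_of_real (nsq w)) * w k)
         = nsq d - (cmod (h2_inner d w))\<^sup>2 / nsq w"
proof -
  define t where "t = h2_inner d w / complex_of_real (nsq w)"
  define a where "a = h2_inner d w"
  have tw: "(\<lambda>k. t * w k) \<in> H2" using a by (simp add: H2_smult)
  have "nsq (\<lambda>k. d k - t * w k) = nsq d + nsq (\<lambda>k. t * w k) - 2 * Re (h2_inner d (\<lambda>k. t * w k))"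
    using nsq_diff[OF a(1) tw] .
  also have "nsq (\<lambda>k. t * w k) = (cmod t)\<^sup>2 * nsq w" using a by (simp add: nsq_smult)
  also have "(cmod t)\<^sup>2 * nsq w = (cmod a)\<^sup>2 / nsq w"
    using nw by (simp add: t_def a_def norm_divide power_divide power2_eq_square)
  also have "h2_inner d (\<lambda>k. t * w k) = cnj t * a" using a by (simp add: inn_smult_right a_def)
  also have "cnj t * a = complex_of_real ((cmod a)\<^sup>2 / nsq w)"
  proof -
    have "cnj t * a = (cnj a * a) / complex_of_real (nsq w)" by (simp add: t_def a_def)
    also have "cnj a * a = complex_of_real ((cmod a)\<^sup>2)"
      by (simp only: complex_norm_square mult.commute)
    finally show ?thesis by simp
  qed
  finally show ?thesis by (simp add: t_def a_def)
qed

lemma cauchy_schwarz: assumes a: "x \<in> H2" "y \<in> H2"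
  shows "(cmod (h2_inner x y))\<^sup>2 \<le> nsq x * nsq y"
proof (cases "nsq y = 0")
  case True
  then have "y = (\<lambda>_. 0)" using a nsq_eq0 by blast
  then show ?thesis using True by (simp add: inn_zero_right)
next
  case False
  have p: "nsq y > 0" using False nsq_nonneg[OF a(2)] by simp
  have "0 \<le> nsq (\<lambda>k. x k - (h2_inner x y / complex_of_real (nsq y)) * y k)"
    using a by (intro nsq_nonneg H2_diff H2_smult)
  also have "\<dots> = nsq x - (cmod (h2_inner x y))\<^sup>2 / nsq y" using key_sub[OF a False] .
  finally have "(cmod (h2_inner x y))\<^sup>2 / nsq y \<le> nsq x" by simp
  thus ?thesis using p by (simp add: divide_le_eq mult.commute)
qed

lemma cs_norm: assumes a: "x \<in> H2" "y \<in> H2"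
  shows "cmod (h2_inner x y) \<le> h2_norm x * h2_norm y"
proof -
  have "cmod (h2_inner x y) = sqrt ((cmod (h2_inner x y))\<^sup>2)" by simp
  also have "\<dots> \<le> sqrt (nsq x * nsq y)" using cauchy_schwarz[OF a] by (rule real_sqrt_le_mono)
  finally show ?thesis by (simp add: h2_norm_nsq real_sqrt_mult)
qed

lemma h2_norm_nonneg: "x \<in> H2 \<Longrightarrow> h2_norm x \<ge> 0"
  by (simp add: h2_norm_nsq nsq_nonneg)

lemma h2_norm_sq: "x \<in> H2 \<Longrightarrow> (h2_norm x)\<^sup>2 = nsq x"
  by (simp add: h2_norm_nsq nsq_nonneg)

lemma norm_triangle: assumes a: "x \<in> H2" "y \<in> H2"
  shows "h2_norm (\<lambda>k. x k + y k) \<le> h2_norm x + h2_norm y"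
proof -
  have "nsq (\<lambda>k. x k + y k) = nsq x + nsq y + 2 * Re (h2_inner x y)" using nsq_add[OF a] .
  also have "Re (h2_inner x y) \<le> h2_norm x * h2_norm y"
    using cs_norm[OF a] complex_Re_le_cmod[of "h2_inner x y"] by linarith
  finally have "(h2_norm (\<lambda>k. x k + y k))\<^sup>2 \<le> (h2_norm x + h2_norm y)\<^sup>2"
    using a by (simp add: h2_norm_sq H2_add power2_sum)
  moreover have "0 \<le> h2_norm x + h2_norm y" using h2_norm_nonneg a by (simp add: add_nonneg_nonneg)
  ultimately show ?thesis using power2_le_imp_le by blast
qed

lemma dist_triangle_h2: assumes a: "x \<in> H2" "y \<in> H2" "z \<in> H2"
  shows "h2_norm (\<lambda>k. x k - z k) \<le> h2_norm (\<lambda>k. x k - y k) + h2_norm (\<lambda>k. y k - z k)"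
proof -
  have "(\<lambda>k. x k - z k) = (\<lambda>k. (x k - y k) + (y k - z k))" by simp
  thus ?thesis using norm_triangle[of "\<lambda>k. x k - y k" "\<lambda>k. y k - z k"] a
    by (simp add: H2_diff)
qed

lemma dist_sym_h2: "h2_norm (\<lambda>k. x k - y k) = h2_norm (\<lambda>k. y k - x k)"
  unfolding h2_norm_def by (simp add: norm_minus_commute)

lemma h2_norm_smult: "x \<in> H2 \<Longrightarrow> h2_norm (\<lambda>k. c * x k) = cmod c * h2_norm x"
  by (simp add: h2_norm_nsq nsq_smult real_sqrt_mult)

lemma h2_norm_eq0: "x \<in> H2 \<Longrightarrow> h2_norm x = 0 \<longleftrightarrow> x = (\<lambda>_. 0)"
  by (simp add: h2_norm_nsq nsq_eq0 nsq_nonneg)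

lemma coord_le_norm: "x \<in> H2 \<Longrightarrow> cmod (x k) \<le> h2_norm x"
  unfolding h2_norm_nsq using coord_le real_sqrt_le_mono by fastforce



lemma H2_complete:
  assumes s: "\<And>j. s j \<in> H2"
    and c: "\<And>e. e > 0 \<Longrightarrow> \<exists>N. \<forall>i\<ge>N. \<forall>j\<ge>N. h2_norm (\<lambda>k. s i k - s j k) < e"
  shows "\<exists>x\<in>H2. (\<lambda>j. h2_norm (\<lambda>k. s j k - x k)) \<longlonglongrightarrow> 0"
proof -
  have cc: "Cauchy (\<lambda>j. s j k)" for k
  proof (rule CauchyI)
    fix e :: real assume "e > 0"
    then obtain N where N: "\<forall>i\<ge>N. \<forall>j\<ge>N. h2_norm (\<lambda>k. s i k - s j k) < e" using c by blast
    show "\<exists>M. \<forall>m\<ge>M. \<forall>n\<ge>M. norm (s m k - s n k) < e"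
    proof (intro exI allI impI)
      fix m n assume mn: "m \<ge> N" "n \<ge> N"
      have "norm (s m k - s n k) \<le> h2_norm (\<lambda>k. s m k - s n k)"
        using coord_le_norm[of "\<lambda>k. s m k - s n k" k] H2_diff s by simp
      thus "norm (s m k - s n k) < e" using N mn by fastforce
    qed
  qed
  define x where "x = (\<lambda>k. lim (\<lambda>j. s j k))"
  have xl: "(\<lambda>j. s j k) \<longlonglongrightarrow> x k" for k
    using cc unfolding x_def by (simp add: Cauchy_convergent_iff convergent_LIMSEQ_iff)
  have main: "\<exists>N. \<forall>i\<ge>N. summable (\<lambda>k. (cmod (s i k - x k))\<^sup>2) \<and> (\<Sum>k. (cmod (s i k - x k))\<^sup>2) \<le> e\<^sup>2"
    if e: "e > 0" for e :: real
  proof -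
    obtain N where N: "\<forall>i\<ge>N. \<forall>j\<ge>N. h2_norm (\<lambda>k. s i k - s j k) < e" using c e by blast
    show ?thesis
    proof (intro exI allI impI)
      fix i assume i: "i \<ge> N"
      have ps: "(\<Sum>k<K. (cmod (s i k - x k))\<^sup>2) \<le> e\<^sup>2" for K
      proof -
        have lim: "(\<lambda>j. \<Sum>k<K. (cmod (s i k - s j k))\<^sup>2) \<longlonglongrightarrow> (\<Sum>k<K. (cmod (s i k - x k))\<^sup>2)"
          by (intro tendsto_intros xl)
        have "\<forall>j\<ge>N. (\<Sum>k<K. (cmod (s i k - s j k))\<^sup>2) \<le> e\<^sup>2"
        proof (intro allI impI)
          fix j assume j: "j \<ge> N"
          have hd: "(\<lambda>k. s i k - s j k) \<in> H2" using s H2_diff by blast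
          have "(\<Sum>k<K. (cmod (s i k - s j k))\<^sup>2) \<le> nsq (\<lambda>k. s i k - s j k)"
            using hd unfolding nsq_def H2_iff by (intro sum_le_suminf) auto
          also have "\<dots> = (h2_norm (\<lambda>k. s i k - s j k))\<^sup>2" using hd by (simp add: h2_norm_sq)
          also have "\<dots> \<le> e\<^sup>2" using N i j hd h2_norm_nonneg
            by (intro power_mono) (auto simp: less_imp_le)
          finally show "(\<Sum>k<K. (cmod (s i k - s j k))\<^sup>2) \<le> e\<^sup>2" .
        qed
        then show ?thesis using lim by (intro LIMSEQ_le_const2) auto
      qed
      have sm: "summable (\<lambda>k. (cmod (s i k - x k))\<^sup>2)"
        using ps by (intro summableI_nonneg_bounded) auto
      then show "summable (\<lambda>k. (cmod (s i k - x k))\<^sup>2) \<and> (\<Sum>k. (cmod (s i k - x k))\<^sup>2) \<le> e\<^sup>2"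
        using ps by (auto intro: suminf_le_const)
    qed
  qed
  obtain N1 where "\<forall>i\<ge>N1. summable (\<lambda>k. (cmod (s i k - x k))\<^sup>2)"
    using main[of 1] by auto
  hence d: "(\<lambda>k. s N1 k - x k) \<in> H2" by (simp add: H2_iff)
  have "(\<lambda>k. s N1 k - (s N1 k - x k)) \<in> H2" using d s by (rule H2_diff[rotated])
  hence xH: "x \<in> H2" by simp
  have "(\<lambda>j. h2_norm (\<lambda>k. s j k - x k)) \<longlonglongrightarrow> 0"
  proof (rule LIMSEQ_I)
    fix r :: real assume r: "r > 0"
    obtain N where N: "\<forall>i\<ge>N. summable (\<lambda>k. (cmod (s i k - x k))\<^sup>2) \<and> (\<Sum>k. (cmod (s i k - x k))\<^sup>2) \<le> (r/2)\<^sup>2"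
      using main[of "r/2"] r by auto
    show "\<exists>no. \<forall>n\<ge>no. norm (h2_norm (\<lambda>k. s n k - x k) - 0) < r"
    proof (intro exI allI impI)
      fix n assume n: "n \<ge> N"
      have hn: "(\<lambda>k. s n k - x k) \<in> H2" using s xH H2_diff by blast
      have "h2_norm (\<lambda>k. s n k - x k) \<le> sqrt ((r/2)\<^sup>2)"
        unfolding h2_norm_def using N n by (intro real_sqrt_le_mono) auto
      also have "\<dots> = r/2" using r by simp
      finally show "norm (h2_norm (\<lambda>k. s n k - x k) - 0) < r"
        using h2_norm_nonneg[OF hn] r by simp
    qed
  qed
  thus ?thesis using xH by blast
qed



lemma cs_parts:
  assumes "closed_subspace N"
  shows "N \<subseteq> H2" "(\<lambda>_. 0) \<in> N" "\<And>x y. x \<in> N \<Longrightarrow> y \<in> N \<Longrightarrow> (\<lambda>k. x k + y k) \<in> N"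
    "\<And>c x. x \<in> N \<Longrightarrow> (\<lambda>k. c * x k) \<in> N"
    "\<And>s x. (\<And>j. s j \<in> N) \<Longrightarrow> x \<in> H2 \<Longrightarrow> (\<lambda>j. h2_norm (\<lambda>k. s j k - x k)) \<longlonglongrightarrow> 0 \<Longrightarrow> x \<in> N"
  using assms unfolding closed_subspace_def by blast+

lemma H2_proj:
  assumes N: "closed_subspace N" and x: "x \<in> H2"
  shows "\<exists>p\<in>N. \<forall>y\<in>N. h2_inner (\<lambda>k. x k - p k) y = 0"
proof -
  note NP = cs_parts[OF N]
  define f where "f y = nsq (\<lambda>k. x k - y k)" for y
  define D where "D = Inf (f ` N)"
  have fnn: "y \<in> N \<Longrightarrow> 0 \<le> f y" for y
    unfolding f_def using NP(1) x by (intro nsq_nonneg H2_diff) auto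
  have bdd: "bdd_below (f ` N)" using fnn by (intro bdd_belowI[where m=0]) auto
  have ne: "f ` N \<noteq> {}" using NP(2) by auto
  have Dle: "y \<in> N \<Longrightarrow> D \<le> f y" for y unfolding D_def using bdd by (auto intro: cInf_lower)
  have D0: "0 \<le> D" unfolding D_def using ne fnn by (auto intro: cInf_greatest)
  have near: "\<forall>j. \<exists>y. y \<in> N \<and> f y < D + inverse (real (Suc j))"
  proof
    fix j
    have "Inf (f ` N) < D + inverse (real (Suc j))" unfolding D_def by simp
    then obtain v where "v \<in> f ` N" "v < D + inverse (real (Suc j))"
      using cInf_less_iff[OF ne bdd] by blast
    thus "\<exists>y. y \<in> N \<and> f y < D + inverse (real (Suc j))" by auto
  qed
  obtain Y where Y: "\<And>j. Y j \<in> N" "\<And>j. f (Y j) < D + inverse (real (Suc j))"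
    using choice[OF near] by blast
  have YH: "Y j \<in> H2" for j using Y NP(1) by auto
  have par: "nsq (\<lambda>k. Y i k - Y j k) \<le> 2 * inverse (real (Suc i)) + 2 * inverse (real (Suc j))" for i j
  proof -
    define a where "a = (\<lambda>k. x k - Y j k)"
    define b where "b = (\<lambda>k. x k - Y i k)"
    define m where "m = (\<lambda>k. (1/2) * (Y i k + Y j k))"
    have aH: "a \<in> H2" and bH: "b \<in> H2" unfolding a_def b_def using x YH by (auto intro: H2_diff)
    have mN: "m \<in> N" unfolding m_def using Y NP by blast
    have e1: "nsq (\<lambda>k. a k + b k) = nsq a + nsq b + 2 * Re (h2_inner a b)" using nsq_add[OF aH bH] .
    have e2: "nsq (\<lambda>k. a k - b k) = nsq a + nsq b - 2 * Re (h2_inner a b)" using nsq_diff[OF aH bH] .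
    have "(\<lambda>k. a k - b k) = (\<lambda>k. Y i k - Y j k)" unfolding a_def b_def by auto
    hence e3: "nsq (\<lambda>k. Y i k - Y j k) = 2 * nsq a + 2 * nsq b - nsq (\<lambda>k. a k + b k)"
      using e1 e2 by simp
    have "(\<lambda>k. a k + b k) = (\<lambda>k. 2 * (x k - m k))" unfolding a_def b_def m_def
      by (auto simp: algebra_simps)
    moreover have "nsq (\<lambda>k. 2 * (x k - m k)) = (cmod 2)\<^sup>2 * nsq (\<lambda>k. x k - m k)"
      using mN NP(1) x by (intro nsq_smult H2_diff) auto
    ultimately have "nsq (\<lambda>k. a k + b k) = 4 * f m"
      unfolding f_def by (simp only:) simp
    hence "nsq (\<lambda>k. a k + b k) \<ge> 4 * D" using Dle[OF mN] by simp
    moreover have "nsq a < D + inverse (real (Suc j))" using Y(2)[of j] unfolding a_def f_def .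
    moreover have "nsq b < D + inverse (real (Suc i))" using Y(2)[of i] unfolding b_def f_def .
    ultimately show ?thesis using e3 by linarith
  qed
  have cauchy: "\<exists>M. \<forall>i\<ge>M. \<forall>j\<ge>M. h2_norm (\<lambda>k. Y i k - Y j k) < e" if e: "e > 0" for e
  proof -
    obtain M :: nat where M: "4 / e\<^sup>2 < real M" using reals_Archimedean2 by blast
    show ?thesis
    proof (intro exI allI impI)
      fix i j assume ij: "i \<ge> M" "j \<ge> M"
      have "inverse (real (Suc i)) \<le> inverse (real (Suc M))" using ij by (simp add: field_simps)
      moreover have "inverse (real (Suc j)) \<le> inverse (real (Suc M))" using ij by (simp add: field_simps)
      moreover have "4 * inverse (real (Suc M)) < e\<^sup>2"
      proof -
        have "4 < e\<^sup>2 * real M" using M e by (simp add: field_simps)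
        also have "\<dots> \<le> e\<^sup>2 * real (Suc M)" using e by simp
        finally show ?thesis by (simp add: field_simps)
      qed
      ultimately have "nsq (\<lambda>k. Y i k - Y j k) < e\<^sup>2" using par[of i j] by linarith
      hence "sqrt (nsq (\<lambda>k. Y i k - Y j k)) < sqrt (e\<^sup>2)" by (rule real_sqrt_less_mono)
      thus "h2_norm (\<lambda>k. Y i k - Y j k) < e" using e by (simp add: h2_norm_nsq)
    qed
  qed
  obtain p where pH: "p \<in> H2" and plim: "(\<lambda>j. h2_norm (\<lambda>k. Y j k - p k)) \<longlonglongrightarrow> 0"
    using H2_complete[of Y] YH cauchy by blast
  have pN: "p \<in> N" using NP(5)[of Y p] Y(1) pH plim by blast
  have "h2_norm (\<lambda>k. x k - p k) \<le> sqrt D"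
  proof (rule LIMSEQ_le_const)
    show "(\<lambda>j. sqrt (D + inverse (real (Suc j))) + h2_norm (\<lambda>k. Y j k - p k)) \<longlonglongrightarrow> sqrt D"
    proof -
      have l1: "(\<lambda>j. D + inverse (real (Suc j))) \<longlonglongrightarrow> D + 0"
        by (rule tendsto_add[OF tendsto_const LIMSEQ_inverse_real_of_nat])
      hence "(\<lambda>j. D + inverse (real (Suc j))) \<longlonglongrightarrow> D" by simp
      hence "(\<lambda>j. sqrt (D + inverse (real (Suc j))) + h2_norm (\<lambda>k. Y j k - p k)) \<longlonglongrightarrow> sqrt D + 0"
        by (intro tendsto_add tendsto_real_sqrt plim)
      thus ?thesis by simp
    qed
    show "\<exists>N. \<forall>n\<ge>N. h2_norm (\<lambda>k. x k - p k) \<le> sqrt (D + inverse (real (Suc n))) + h2_norm (\<lambda>k. Y n k - p k)"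
    proof (intro exI allI impI)
      fix n
      have "h2_norm (\<lambda>k. x k - p k) \<le> h2_norm (\<lambda>k. x k - Y n k) + h2_norm (\<lambda>k. Y n k - p k)"
        using dist_triangle_h2[OF x YH pH] .
      moreover have "h2_norm (\<lambda>k. x k - Y n k) \<le> sqrt (D + inverse (real (Suc n)))"
        using Y(2)[of n] unfolding f_def h2_norm_nsq by (simp add: real_sqrt_le_mono less_imp_le)
      ultimately show "h2_norm (\<lambda>k. x k - p k) \<le> sqrt (D + inverse (real (Suc n))) + h2_norm (\<lambda>k. Y n k - p k)"
        by linarith
    qed
  qed
  hence "f p \<le> D" unfolding f_def h2_norm_nsq using D0
    by (metis real_sqrt_le_iff)
  hence fmin: "y \<in> N \<Longrightarrow> f p \<le> f y" for y using Dle by force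
  have dH: "(\<lambda>k. x k - p k) \<in> H2" using x pH by (rule H2_diff)
  have "h2_inner (\<lambda>k. x k - p k) w = 0" if wN: "w \<in> N" for w
  proof (cases "nsq w = 0")
    case True
    hence "w = (\<lambda>_. 0)" using wN NP(1) nsq_eq0 by blast
    thus ?thesis by (simp add: inn_zero_right)
  next
    case False
    define d where "d = (\<lambda>k. x k - p k)"
    define t where "t = h2_inner d w / complex_of_real (nsq w)"
    have wH: "w \<in> H2" using wN NP(1) by auto
    have nwp: "nsq w > 0" using False nsq_nonneg[OF wH] by simp
    have yN: "(\<lambda>k. p k + t * w k) \<in> N" using pN wN NP by blast
    have "(\<lambda>k. x k - (p k + t * w k)) = (\<lambda>k. d k - t * w k)" unfolding d_def by auto
    hence "f (\<lambda>k. p k + t * w k) = nsq d - (cmod (h2_inner d w))\<^sup>2 / nsq w"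
      unfolding f_def t_def using key_sub[of d w] dH wH False d_def by simp
    moreover have "f p = nsq d" unfolding f_def d_def ..
    ultimately have "(cmod (h2_inner d w))\<^sup>2 / nsq w \<le> 0" using fmin[OF yN] by simp
    hence "(cmod (h2_inner d w))\<^sup>2 \<le> 0" using nwp by (simp add: divide_le_0_iff)
    thus ?thesis unfolding d_def by simp
  qed
  thus ?thesis using pN by blast
qed



definition lin :: "((nat \<Rightarrow> complex) \<Rightarrow> nat \<Rightarrow> complex) \<Rightarrow> bool" where
  "lin T \<longleftrightarrow> (\<forall>x\<in>H2. T x \<in> H2) \<and>
     (\<forall>x\<in>H2. \<forall>y\<in>H2. T (\<lambda>k. x k + y k) = (\<lambda>k. T x k + T y k)) \<and>
     (\<forall>c. \<forall>x\<in>H2. T (\<lambda>k. c * x k) = (\<lambda>k. c * T x k))"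

lemma lin_H2: "lin T \<Longrightarrow> x \<in> H2 \<Longrightarrow> T x \<in> H2"
  by (simp add: lin_def)
lemma lin_add: "lin T \<Longrightarrow> x \<in> H2 \<Longrightarrow> y \<in> H2 \<Longrightarrow> T (\<lambda>k. x k + y k) = (\<lambda>k. T x k + T y k)"
  by (simp add: lin_def)
lemma lin_smult: "lin T \<Longrightarrow> x \<in> H2 \<Longrightarrow> T (\<lambda>k. c * x k) = (\<lambda>k. c * T x k)"
  by (simp add: lin_def)
lemma lin_zero: "lin T \<Longrightarrow> T (\<lambda>_. 0) = (\<lambda>_. 0)"
  using lin_smult[of T "\<lambda>_. 0" 0] H2_zero by simp
lemma lin_diff: "lin T \<Longrightarrow> x \<in> H2 \<Longrightarrow> y \<in> H2 \<Longrightarrow> T (\<lambda>k. x k - y k) = (\<lambda>k. T x k - T y k)"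
proof -
  assume a: "lin T" "x \<in> H2" "y \<in> H2"
  have "T (\<lambda>k. x k - y k) = T (\<lambda>k. x k + (-1) * y k)" by simp
  also have "\<dots> = (\<lambda>k. T x k + T (\<lambda>k. (-1) * y k) k)"
    using lin_add[OF a(1) a(2) H2_smult[OF a(3), of "-1"]] .
  also have "T (\<lambda>k. (-1) * y k) = (\<lambda>k. (-1) * T y k)" using lin_smult[OF a(1) a(3)] .
  finally show ?thesis by simp
qed

lemma lin_comp: "lin T \<Longrightarrow> lin U \<Longrightarrow> lin (\<lambda>x. T (U x))"
  unfolding lin_def by (auto simp: H2_smult H2_add)

lemma lin_funpow: "lin T \<Longrightarrow> lin (T ^^ j)"
proof (induction j)
  case 0
  have l: "lin (\<lambda>a. a)" unfolding lin_def by simp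
  have e: "T ^^ 0 = (\<lambda>a. a)" by (rule ext) simp
  show ?case by (simp only: e l)
next
  case (Suc j)
  have "lin (T ^^ j)" using Suc by simp
  hence "lin (\<lambda>x. T ((T ^^ j) x))" using lin_comp[OF Suc.prems] by blast
  thus ?case by (simp add: comp_def)
qed

lemma H2_sum: "finite I \<Longrightarrow> (\<And>i. i \<in> I \<Longrightarrow> y i \<in> H2) \<Longrightarrow> (\<lambda>k. \<Sum>i\<in>I. c i * y i k) \<in> H2"
proof (induction I rule: finite_induct)
  case empty thus ?case by (simp add: H2_zero)
next
  case (insert a I)
  have "(\<lambda>k. c a * y a k + (\<Sum>i\<in>I. c i * y i k)) \<in> H2"
    using insert by (intro H2_add H2_smult) auto
  thus ?case using insert by simp
qed

lemma lin_sum: "finite I \<Longrightarrow> lin T \<Longrightarrow> (\<And>i. i \<in> I \<Longrightarrow> y i \<in> H2) \<Longrightarrow>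
   T (\<lambda>k. \<Sum>i\<in>I. c i * y i k) = (\<lambda>k. \<Sum>i\<in>I. c i * T (y i) k)"
proof (induction I rule: finite_induct)
  case empty thus ?case by (simp add: lin_zero)
next
  case (insert a I)
  have "T (\<lambda>k. c a * y a k + (\<Sum>i\<in>I. c i * y i k)) = (\<lambda>k. T (\<lambda>k. c a * y a k) k + T (\<lambda>k. \<Sum>i\<in>I. c i * y i k) k)"
    using insert by (intro lin_add H2_smult H2_sum) auto
  also have "\<dots> = (\<lambda>k. c a * T (y a) k + (\<Sum>i\<in>I. c i * T (y i) k))"
    using insert by (simp add: lin_smult)
  finally show ?case using insert by simp
qed

lemma bounded_op_lin: "bounded_op T \<Longrightarrow> lin T"
  by (simp add: bounded_op_def lin_def)

lemma bounded_op_bound: "bounded_op T \<Longrightarrow> \<exists>C. \<forall>x\<in>H2. h2_norm (T x) \<le> C * h2_norm x"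
  by (simp add: bounded_op_def)

lemma Mz_0[simp]: "Mz x 0 = 0" by (simp add: Mz_def)
lemma Mz_Suc[simp]: "Mz x (Suc k) = x k" by (simp add: Mz_def)

lemma Mz_sq_sums: "x \<in> H2 \<Longrightarrow> (\<lambda>k. (cmod (Mz x k))\<^sup>2) sums nsq x"
proof -
  assume "x \<in> H2"
  hence "(\<lambda>k. (cmod (Mz x (Suc k)))\<^sup>2) sums nsq x" by (simp add: H2_iff nsq_def summable_sums)
  hence "(\<lambda>k. (cmod (Mz x k))\<^sup>2) sums (nsq x + (cmod (Mz x 0))\<^sup>2)"
    by (rule sums_Suc)
  thus ?thesis by simp
qed

lemma Mz_H2: "x \<in> H2 \<Longrightarrow> Mz x \<in> H2"
  using Mz_sq_sums unfolding H2_iff by (blast intro: sums_summable)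

lemma nsq_Mz: "x \<in> H2 \<Longrightarrow> nsq (Mz x) = nsq x"
  using Mz_sq_sums unfolding nsq_def by (blast intro: sums_unique[symmetric])

lemma h2_norm_Mz: "x \<in> H2 \<Longrightarrow> h2_norm (Mz x) = h2_norm x"
  by (simp add: h2_norm_nsq nsq_Mz)

lemma inn_Mz: "x \<in> H2 \<Longrightarrow> y \<in> H2 \<Longrightarrow> h2_inner (Mz x) (Mz y) = h2_inner x y"
proof -
  assume a: "x \<in> H2" "y \<in> H2"
  have "(\<lambda>k. Mz x (Suc k) * cnj (Mz y (Suc k))) sums h2_inner x y"
    using inn_summable[OF a] by (simp add: h2_inner_def summable_sums)
  hence "(\<lambda>k. Mz x k * cnj (Mz y k)) sums (h2_inner x y + Mz x 0 * cnj (Mz y 0))"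
    by (rule sums_Suc)
  thus ?thesis unfolding h2_inner_def[of "Mz x"] by (simp add: sums_unique[symmetric])
qed

lemma lin_Mz: "lin Mz"
proof -
  have "\<forall>x\<in>H2. Mz x \<in> H2" using Mz_H2 by blast
  moreover have "\<forall>x\<in>H2. \<forall>y\<in>H2. Mz (\<lambda>k. x k + y k) = (\<lambda>k. Mz x k + Mz y k)"
    by (auto simp: Mz_def fun_eq_iff)
  moreover have "\<forall>c. \<forall>x\<in>H2. Mz (\<lambda>k. c * x k) = (\<lambda>k. c * Mz x k)"
    by (auto simp: Mz_def fun_eq_iff)
  ultimately show ?thesis unfolding lin_def by blast
qed

lemma lim_unique_h2:
  assumes "\<And>j. s j \<in> H2" "a \<in> H2" "b \<in> H2"
    "(\<lambda>j. h2_norm (\<lambda>k. s j k - a k)) \<longlonglongrightarrow> 0" "(\<lambda>j. h2_norm (\<lambda>k. s j k - b k)) \<longlonglongrightarrow> 0"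
  shows "a = b"
proof -
  have "h2_norm (\<lambda>k. a k - b k) \<le> 0 + 0"
  proof (rule LIMSEQ_le_const)
    show "(\<lambda>j. h2_norm (\<lambda>k. s j k - a k) + h2_norm (\<lambda>k. s j k - b k)) \<longlonglongrightarrow> 0 + 0"
      using assms by (intro tendsto_add)
    show "\<exists>N. \<forall>n\<ge>N. h2_norm (\<lambda>k. a k - b k) \<le> h2_norm (\<lambda>k. s n k - a k) + h2_norm (\<lambda>k. s n k - b k)"
      using dist_triangle_h2[OF assms(2) assms(1) assms(3)] dist_sym_h2[of a] by metis
  qed
  hence "h2_norm (\<lambda>k. a k - b k) = 0" using h2_norm_nonneg[OF H2_diff[OF assms(2,3)]] by simp
  hence "(\<lambda>k. a k - b k) = (\<lambda>_. 0)" using h2_norm_eq0 H2_diff assms(2,3) by blast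
  thus ?thesis by (simp add: fun_eq_iff)
qed

lemma lin_cont:
  assumes T: "lin T" and C: "\<forall>x\<in>H2. h2_norm (T x) \<le> C * h2_norm x"
    and s: "\<And>j. s j \<in> H2" and a: "a \<in> H2" and l: "(\<lambda>j. h2_norm (\<lambda>k. s j k - a k)) \<longlonglongrightarrow> 0"
  shows "(\<lambda>j. h2_norm (\<lambda>k. T (s j) k - T a k)) \<longlonglongrightarrow> 0"
proof (rule Lim_null_comparison)
  show "\<forall>\<^sub>F j in sequentially. norm (h2_norm (\<lambda>k. T (s j) k - T a k)) \<le> C * h2_norm (\<lambda>k. s j k - a k)"
  proof (intro always_eventually allI)
    fix j
    have d: "(\<lambda>k. s j k - a k) \<in> H2" using s a by (rule H2_diff)
    have "T (\<lambda>k. s j k - a k) = (\<lambda>k. T (s j) k - T a k)" using lin_diff[OF T s a] .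
    moreover have "T (\<lambda>k. s j k - a k) \<in> H2" using T d by (rule lin_H2)
    ultimately show "norm (h2_norm (\<lambda>k. T (s j) k - T a k)) \<le> C * h2_norm (\<lambda>k. s j k - a k)"
      using C d h2_norm_nonneg by auto
  qed
  show "(\<lambda>j. C * h2_norm (\<lambda>k. s j k - a k)) \<longlonglongrightarrow> 0"
    using tendsto_mult[OF tendsto_const[of C] l] by simp
qed

lemma closed_image:
  assumes T: "lin T" and C: "\<forall>x\<in>H2. h2_norm (T x) \<le> C * h2_norm x"
    and D: "\<forall>x\<in>H2. h2_norm x \<le> D * h2_norm (T x)"
    and N: "closed_subspace N"
  shows "closed_subspace (T ` N)"
proof -
  note NP = cs_parts[OF N]
  have sub: "T ` N \<subseteq> H2" using NP(1) T lin_H2 by blast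
  have z: "(\<lambda>_. 0) \<in> T ` N" using NP(2) lin_zero[OF T] by (metis image_eqI)
  have ad: "(\<lambda>k. x k + y k) \<in> T ` N" if xy: "x \<in> T ` N" "y \<in> T ` N" for x y
  proof -
    obtain a b where ab: "a \<in> N" "b \<in> N" "x = T a" "y = T b" using xy by blast
    have "a \<in> H2" "b \<in> H2" using ab NP(1) by auto
    hence "(\<lambda>k. x k + y k) = T (\<lambda>k. a k + b k)" using lin_add[OF T] ab by simp
    thus ?thesis using NP(3) ab by blast
  qed
  have sm: "(\<lambda>k. c * x k) \<in> T ` N" if xy: "x \<in> T ` N" for x c
  proof -
    obtain a where ab: "a \<in> N" "x = T a" using xy by blast
    have "a \<in> H2" using ab NP(1) by auto
    hence "(\<lambda>k. c * x k) = T (\<lambda>k. c * a k)" using lin_smult[OF T] ab by simp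
    thus ?thesis using NP(4) ab by blast
  qed
  have lim: "x \<in> T ` N" if s: "\<forall>j. s j \<in> T ` N" and x: "x \<in> H2"
     and l: "(\<lambda>j. h2_norm (\<lambda>k. s j k - x k)) \<longlonglongrightarrow> 0" for s x
  proof -
    have "\<forall>j. \<exists>y. y \<in> N \<and> s j = T y" using s by blast
    then obtain y where y: "\<And>j. y j \<in> N" "\<And>j. s j = T (y j)" using choice[of "\<lambda>j y. y \<in> N \<and> s j = T y"] by blast
    have yH: "y j \<in> H2" for j using y NP(1) by auto
    have sH: "s j \<in> H2" for j using s sub by auto
    define D' where "D' = max D 1"
    have D'p: "D' > 0" unfolding D'_def by simp
    have D': "h2_norm z \<le> D' * h2_norm (T z)" if zH: "z \<in> H2" for z
    proof -
      have "h2_norm z \<le> D * h2_norm (T z)" using D zH by auto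
      also have "\<dots> \<le> D' * h2_norm (T z)" unfolding D'_def
        using h2_norm_nonneg[OF lin_H2[OF T zH]] by (simp add: mult_right_mono)
      finally show ?thesis .
    qed
    have cy: "\<exists>M. \<forall>i\<ge>M. \<forall>j\<ge>M. h2_norm (\<lambda>k. y i k - y j k) < e" if e: "e > 0" for e
    proof -
      obtain M where M: "\<forall>j\<ge>M. norm (h2_norm (\<lambda>k. s j k - x k) - 0) < e / (2 * D')"
        using LIMSEQ_D[OF l, of "e / (2 * D')"] e D'p by auto
      show ?thesis
      proof (intro exI allI impI)
        fix i j assume ij: "i \<ge> M" "j \<ge> M"
        have "h2_norm (\<lambda>k. y i k - y j k) \<le> D' * h2_norm (T (\<lambda>k. y i k - y j k))"
          using D' H2_diff yH by blast
        also have "T (\<lambda>k. y i k - y j k) = (\<lambda>k. s i k - s j k)" using lin_diff[OF T yH yH] y by simp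
        also have "h2_norm (\<lambda>k. s i k - s j k) \<le> h2_norm (\<lambda>k. s i k - x k) + h2_norm (\<lambda>k. x k - s j k)"
          using dist_triangle_h2[OF sH x sH] .
        also have "h2_norm (\<lambda>k. x k - s j k) = h2_norm (\<lambda>k. s j k - x k)" by (rule dist_sym_h2)
        finally have "h2_norm (\<lambda>k. y i k - y j k) \<le> D' * (h2_norm (\<lambda>k. s i k - x k) + h2_norm (\<lambda>k. s j k - x k))"
          using D'p by (simp add: mult_left_mono)
        also have "\<dots> < D' * (e / (2 * D') + e / (2 * D'))"
          using M ij D'p h2_norm_nonneg[OF H2_diff[OF sH x]] by (intro mult_strict_left_mono add_strict_mono) auto
        also have "\<dots> = e" using D'p by (simp add: field_simps)
        finally show "h2_norm (\<lambda>k. y i k - y j k) < e" .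
      qed
    qed
    obtain v where vH: "v \<in> H2" and vl: "(\<lambda>j. h2_norm (\<lambda>k. y j k - v k)) \<longlonglongrightarrow> 0"
      using H2_complete[of y] yH cy by blast
    have vN: "v \<in> N" using NP(5)[of y v] y vH vl by blast
    have "(\<lambda>j. h2_norm (\<lambda>k. T (y j) k - T v k)) \<longlonglongrightarrow> 0"
      using lin_cont[OF T C yH vH vl] .
    hence "(\<lambda>j. h2_norm (\<lambda>k. s j k - T v k)) \<longlonglongrightarrow> 0" using y by simp
    hence "x = T v" using lim_unique_h2[of s x "T v"] sH x l lin_H2[OF T vH] by blast
    thus ?thesis using vN by blast
  qed
  show ?thesis unfolding closed_subspace_def using sub z ad sm lim by blast
qed



lemma inn_sum_left: "finite I \<Longrightarrow> (\<And>i. i \<in> I \<Longrightarrow> y i \<in> H2) \<Longrightarrow> z \<in> H2 \<Longrightarrow>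
  h2_inner (\<lambda>k. \<Sum>i\<in>I. c i * y i k) z = (\<Sum>i\<in>I. c i * h2_inner (y i) z)"
proof (induction I rule: finite_induct)
  case empty thus ?case by (simp add: inn_zero_left)
next
  case (insert a I)
  have "h2_inner (\<lambda>k. c a * y a k + (\<Sum>i\<in>I. c i * y i k)) z
        = h2_inner (\<lambda>k. c a * y a k) z + h2_inner (\<lambda>k. \<Sum>i\<in>I. c i * y i k) z"
    using insert by (intro inn_add_left H2_smult H2_sum) auto
  thus ?case using insert by (simp add: inn_smult_left)
qed

lemma inn_sum_right: "finite I \<Longrightarrow> (\<And>i. i \<in> I \<Longrightarrow> y i \<in> H2) \<Longrightarrow> z \<in> H2 \<Longrightarrow>
  h2_inner z (\<lambda>k. \<Sum>i\<in>I. c i * y i k) = (\<Sum>i\<in>I. cnj (c i) * h2_inner z (y i))"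
proof -
  assume a: "finite I" "\<And>i. i \<in> I \<Longrightarrow> y i \<in> H2" "z \<in> H2"
  have "h2_inner z (\<lambda>k. \<Sum>i\<in>I. c i * y i k) = cnj (h2_inner (\<lambda>k. \<Sum>i\<in>I. c i * y i k) z)"
    using a by (intro inn_cnj H2_sum) auto
  also have "\<dots> = (\<Sum>i\<in>I. cnj (c i) * h2_inner z (y i))"
    using a by (simp add: inn_sum_left inn_cnj[of z])
  finally show ?thesis .
qed

lemma mult_cnj_sq: "z * cnj z = (complex_of_real (cmod z))\<^sup>2"
  by (metis complex_norm_square of_real_power)

lemma cnj_mult_sq: "cnj z * z = (complex_of_real (cmod z))\<^sup>2"
  by (metis complex_norm_square of_real_power mult.commute)

lemma bessel_coord:
  assumes I: "finite I" and ph: "\<And>i. i \<in> I \<Longrightarrow> \<phi> i \<in> H2"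
    and on: "\<And>i i'. i \<in> I \<Longrightarrow> i' \<in> I \<Longrightarrow> h2_inner (\<phi> i) (\<phi> i') = (if i = i' then 1 else 0)"
  shows "(\<Sum>i\<in>I. (cmod (\<phi> i l))\<^sup>2) \<le> 1"
proof -
  define s where "s = (\<Sum>i\<in>I. (cmod (\<phi> i l))\<^sup>2)"
  define g where "g = (\<lambda>k. \<Sum>i\<in>I. cnj (\<phi> i l) * \<phi> i k)"
  have gH: "g \<in> H2" unfolding g_def using I ph by (intro H2_sum) auto
  have ig: "h2_inner (\<phi> i) g = \<phi> i l" if "i \<in> I" for i
  proof -
    have "h2_inner (\<phi> i) g = (\<Sum>i'\<in>I. cnj (cnj (\<phi> i' l)) * h2_inner (\<phi> i) (\<phi> i'))"
      unfolding g_def using I ph that by (intro inn_sum_right) auto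
    also have "\<dots> = (\<Sum>i'\<in>I. (if i' = i then \<phi> i l else 0))"
      using on[OF that] by (intro sum.cong) auto
    also have "\<dots> = \<phi> i l" using I that by simp
    finally show ?thesis .
  qed
  have "h2_inner g g = (\<Sum>i\<in>I. cnj (\<phi> i l) * h2_inner (\<phi> i) g)"
    using inn_sum_left[where I=I and y=\<phi> and z=g and c = "\<lambda>i. cnj (\<phi> i l)", OF I ph gH, folded g_def] .
  also have "\<dots> = (\<Sum>i\<in>I. complex_of_real ((cmod (\<phi> i l))\<^sup>2))"
    using ig by (intro sum.cong) (auto simp: cnj_mult_sq)
  also have "\<dots> = complex_of_real s" unfolding s_def by simp
  finally have ns: "nsq g = s" using inn_self[OF gH] by simp
  have gl: "g l = complex_of_real s"
    unfolding g_def s_def by (simp add: cnj_mult_sq)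
  have s0: "s \<ge> 0" unfolding s_def by (simp add: sum_nonneg)
  have "(cmod (g l))\<^sup>2 \<le> nsq g" using coord_le[OF gH] .
  hence "s\<^sup>2 \<le> s" using gl ns s0 by simp
  hence "s \<le> 1" using s0 by (cases "s = 0") (auto simp: power2_eq_square)
  thus ?thesis unfolding s_def .
qed

lemma Mz_pow_apply: "(Mz ^^ j) u l = (if j \<le> l then u (l - j) else 0)"
proof (induction j arbitrary: l)
  case 0 thus ?case by simp
next
  case (Suc j)
  show ?case
  proof (cases l)
    case 0 thus ?thesis by simp
  next
    case (Suc l')
    thus ?thesis using Suc.IH by simp
  qed
qed

lemma Mz_pow_H2: "u \<in> H2 \<Longrightarrow> (Mz ^^ j) u \<in> H2"
  by (induction j) (auto simp: Mz_H2)

lemma inn_Mz_pow: "a \<in> H2 \<Longrightarrow> b \<in> H2 \<Longrightarrow> h2_inner ((Mz ^^ j) a) ((Mz ^^ j) b) = h2_inner a b"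
  by (induction j) (auto simp: inn_Mz Mz_pow_H2)

lemma Mz_pow_inv: "Mz ` V \<subseteq> V \<Longrightarrow> a \<in> V \<Longrightarrow> (Mz ^^ j) a \<in> V"
  by (induction j) auto

lemma inn_Mz_pow_gt:
  assumes a: "a \<in> H2" "b \<in> H2" and jk: "k < j"
  shows "h2_inner ((Mz ^^ j) a) ((Mz ^^ k) b) = h2_inner ((Mz ^^ (j - k)) a) b"
proof -
  have "(Mz ^^ j) a = (Mz ^^ k) ((Mz ^^ (j - k)) a)"
    using jk by (metis funpow_add le_add_diff_inverse less_imp_le o_apply)
  thus ?thesis using inn_Mz_pow[OF Mz_pow_H2[OF a(1)] a(2)] by simp
qed

lemma beurling_core:
  assumes M: "closed_subspace V" and inv: "Mz ` V \<subseteq> V"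
    and uv: "u \<in> V" "v \<in> V"
    and uo: "\<And>y. y \<in> Mz ` V \<Longrightarrow> h2_inner u y = 0"
    and vo: "\<And>y. y \<in> Mz ` V \<Longrightarrow> h2_inner v y = 0"
    and nu: "nsq u = 1" and nv: "nsq v = 1" and uvo: "h2_inner u v = 0"
  shows False
proof -
  note VP = cs_parts[OF M]
  define E where "E b = (if b then v else u)" for b :: bool
  have EV: "E b \<in> V" for b unfolding E_def using uv by simp
  have EH: "E b \<in> H2" for b using EV VP(1) by auto
  have Eo: "h2_inner (E b) y = 0" if "y \<in> Mz ` V" for b y unfolding E_def using uo vo that by simp
  have Ein: "h2_inner (E b) (E b') = (if b = b' then 1 else 0)" for b b'
  proof -
    have "h2_inner u u = 1" "h2_inner v v = 1" using inn_self uv VP(1) nu nv by auto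
    moreover have "h2_inner v u = 0" using inn_cnj[of u v] uv VP(1) uvo by auto
    ultimately show ?thesis unfolding E_def using uvo by auto
  qed
  have sh: "h2_inner ((Mz ^^ Suc i) (E b)) (E b') = 0" for i b b'
  proof -
    have "(Mz ^^ Suc i) (E b) = Mz ((Mz ^^ i) (E b))" by simp
    hence "(Mz ^^ Suc i) (E b) \<in> Mz ` V" using Mz_pow_inv[OF inv EV] by auto
    hence "h2_inner (E b') ((Mz ^^ Suc i) (E b)) = 0" by (rule Eo)
    moreover have "(Mz ^^ Suc i) (E b) \<in> H2" by (rule Mz_pow_H2[OF EH])
    ultimately show ?thesis using inn_cnj[of "E b'" "(Mz ^^ Suc i) (E b)"] EH by simp
  qed
  define \<phi> where "\<phi> p = (Mz ^^ fst p) (E (snd p))" for p :: "nat \<times> bool"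
  have phH: "\<phi> p \<in> H2" for p unfolding \<phi>_def by (intro Mz_pow_H2 EH)
  have on: "h2_inner (\<phi> p) (\<phi> q) = (if p = q then 1 else 0)" for p q
  proof -
    obtain j b j' b' where pq: "p = (j, b)" "q = (j', b')" by (cases p, cases q) auto
    consider "j = j'" | "j' < j" | "j < j'" by linarith
    thus ?thesis
    proof cases
      case 1 thus ?thesis using inn_Mz_pow[OF EH EH] Ein pq unfolding \<phi>_def by auto
    next
      case 2
      have "h2_inner (\<phi> p) (\<phi> q) = h2_inner ((Mz ^^ (j - j')) (E b)) (E b')"
        unfolding \<phi>_def pq using inn_Mz_pow_gt[OF EH EH 2] by simp
      also have "\<dots> = 0" using sh[of "j - j' - 1" b b'] 2 by (simp add: Suc_diff_Suc)
      finally show ?thesis using 2 pq by auto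
    next
      case 3
      have "h2_inner (\<phi> q) (\<phi> p) = h2_inner ((Mz ^^ (j' - j)) (E b')) (E b)"
        unfolding \<phi>_def pq using inn_Mz_pow_gt[OF EH EH 3] by simp
      also have "\<dots> = 0" using sh[of "j' - j - 1" b' b] 3 by (simp add: Suc_diff_Suc)
      finally have "h2_inner (\<phi> q) (\<phi> p) = 0" .
      hence "h2_inner (\<phi> p) (\<phi> q) = 0" using inn_cnj[OF phH phH, of q p] by simp
      thus ?thesis using 3 pq by auto
    qed
  qed
  have tail: "\<exists>N0. \<forall>N\<ge>N0. (\<Sum>i<N. (cmod (E b i))\<^sup>2) > 3/4" for b
  proof -
    have "(\<lambda>N. \<Sum>i<N. (cmod (E b i))\<^sup>2) \<longlonglongrightarrow> nsq (E b)"
      unfolding nsq_def using EH[of b] by (simp add: H2_iff summable_LIMSEQ)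
    moreover have "nsq (E b) = 1" unfolding E_def using nu nv by simp
    ultimately have "\<forall>\<^sub>F N in sequentially. (\<Sum>i<N. (cmod (E b i))\<^sup>2) > 3/4"
      by (intro order_tendstoD(1)) auto
    thus ?thesis by (simp add: eventually_sequentially)
  qed
  obtain N1 where N1: "\<forall>N\<ge>N1. (\<Sum>i<N. (cmod (E False i))\<^sup>2) > 3/4" using tail by blast
  obtain N2 where N2: "\<forall>N\<ge>N2. (\<Sum>i<N. (cmod (E True i))\<^sup>2) > 3/4" using tail by blast
  define N0 where "N0 = max N1 N2"
  have tN0: "(\<Sum>i<N0. (cmod (E b i))\<^sup>2) > 3/4" for b
    using N1 N2 unfolding N0_def by (cases b) auto
  define J where "J = 2 * N0"
  define L where "L = J + N0"
  define I where "I = {..<J} \<times> (UNIV :: bool set)"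
  have If: "finite I" unfolding I_def by simp
  have cI: "card I = 2 * J" unfolding I_def by (simp add: card_cartesian_product)
  have "(\<Sum>l<L. \<Sum>p\<in>I. (cmod (\<phi> p l))\<^sup>2) \<le> (\<Sum>l<L. 1)"
    by (intro sum_mono bessel_coord If phH on)
  hence up: "(\<Sum>p\<in>I. \<Sum>l<L. (cmod (\<phi> p l))\<^sup>2) \<le> real L"
    by (subst sum.swap) simp
  have lo: "(\<Sum>l<L. (cmod (\<phi> p l))\<^sup>2) > 3/4" if pI: "p \<in> I" for p
  proof -
    obtain j b where p: "p = (j, b)" and j: "j < J" using pI unfolding I_def by auto
    have "(\<Sum>l\<in>{j..<j + N0}. (cmod (\<phi> p l))\<^sup>2) \<le> (\<Sum>l<L. (cmod (\<phi> p l))\<^sup>2)"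
      using j unfolding L_def by (intro sum_mono2) auto
    moreover have "(\<Sum>l\<in>{j..<j + N0}. (cmod (\<phi> p l))\<^sup>2) = (\<Sum>i<N0. (cmod (E b i))\<^sup>2)"
    proof -
      have "(\<Sum>l\<in>{j..<j + N0}. (cmod (\<phi> p l))\<^sup>2) = (\<Sum>i\<in>{0..<N0}. (cmod (\<phi> p (j + i)))\<^sup>2)"
        by (subst sum.atLeastLessThan_shift_0) (simp add: comp_def)
      also have "\<dots> = (\<Sum>i<N0. (cmod (E b i))\<^sup>2)"
        unfolding p \<phi>_def by (simp add: Mz_pow_apply lessThan_atLeast0)
      finally show ?thesis .
    qed
    ultimately show ?thesis using tN0[of b] by linarith
  qed
  have "(\<Sum>p\<in>I. (3/4::real)) < (\<Sum>p\<in>I. \<Sum>l<L. (cmod (\<phi> p l))\<^sup>2)"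
  proof (rule sum_strict_mono[OF If])
    have "N0 \<noteq> 0" using tN0[of True] by (cases "N0 = 0") auto
    hence "(0, True) \<in> I" unfolding I_def J_def by simp
    thus "I \<noteq> {}" by blast
  qed (use lo in auto)
  hence "3/4 * real (2 * J) < real L" using up cI by simp
  thus False unfolding L_def J_def by simp
qed



definition subsp :: "(nat \<Rightarrow> complex) set \<Rightarrow> bool" where
  "subsp U \<longleftrightarrow> (\<lambda>_. 0) \<in> U \<and> (\<forall>x\<in>U. \<forall>y\<in>U. (\<lambda>k. x k + y k) \<in> U) \<and> (\<forall>c. \<forall>x\<in>U. (\<lambda>k. c * x k) \<in> U)"

lemma subsp_zero: "subsp U \<Longrightarrow> (\<lambda>_. 0) \<in> U" by (simp add: subsp_def)
lemma subsp_add: "subsp U \<Longrightarrow> x \<in> U \<Longrightarrow> y \<in> U \<Longrightarrow> (\<lambda>k. x k + y k) \<in> U" by (simp add: subsp_def)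
lemma subsp_smult: "subsp U \<Longrightarrow> x \<in> U \<Longrightarrow> (\<lambda>k. c * x k) \<in> U" by (simp add: subsp_def)
lemma subsp_diff: "subsp U \<Longrightarrow> x \<in> U \<Longrightarrow> y \<in> U \<Longrightarrow> (\<lambda>k. x k - c * y k) \<in> U"
proof -
  assume a: "subsp U" "x \<in> U" "y \<in> U"
  have "(\<lambda>k. x k + (- c) * y k) \<in> U" using a by (intro subsp_add subsp_smult)
  thus ?thesis by simp
qed

lemma subsp_sum: "finite I \<Longrightarrow> subsp U \<Longrightarrow> (\<And>i. i \<in> I \<Longrightarrow> y i \<in> U) \<Longrightarrow> (\<lambda>k. \<Sum>i\<in>I. c i * y i k) \<in> U"
proof (induction I rule: finite_induct)
  case empty thus ?case by (simp add: subsp_zero)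
next
  case (insert a I)
  have "(\<lambda>k. c a * y a k + (\<Sum>i\<in>I. c i * y i k)) \<in> U"
    using insert by (intro subsp_add subsp_smult) auto
  thus ?case using insert by simp
qed

lemma cs_subsp: "closed_subspace V \<Longrightarrow> subsp V"
  unfolding closed_subspace_def subsp_def by blast

fun inspan :: "(nat \<Rightarrow> complex) set \<Rightarrow> (nat \<Rightarrow> complex) list \<Rightarrow> (nat \<Rightarrow> complex) set" where
  "inspan U [] = U"
| "inspan U (w # ws) = {x. \<exists>a. (\<lambda>k. x k - a * w k) \<in> inspan U ws}"

lemma inspan_subsp: "subsp U \<Longrightarrow> subsp (inspan U ws)"
proof (induction ws)
  case Nil thus ?case by simp
next
  case (Cons w ws)
  hence IH: "subsp (inspan U ws)" by simp
  have z: "(\<lambda>_. 0) \<in> inspan U (w # ws)"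
    using subsp_zero[OF IH] by (auto intro: exI[of _ 0])
  have ad: "(\<lambda>k. x k + y k) \<in> inspan U (w # ws)" if xy: "x \<in> inspan U (w # ws)" "y \<in> inspan U (w # ws)" for x y
  proof -
    obtain a b where ab: "(\<lambda>k. x k - a * w k) \<in> inspan U ws" "(\<lambda>k. y k - b * w k) \<in> inspan U ws"
      using xy by auto
    have "(\<lambda>k. (x k - a * w k) + (y k - b * w k)) \<in> inspan U ws" using subsp_add[OF IH ab] .
    moreover have "(\<lambda>k. (x k - a * w k) + (y k - b * w k)) = (\<lambda>k. (x k + y k) - (a + b) * w k)"
      by (simp add: fun_eq_iff algebra_simps)
    ultimately show ?thesis by auto
  qed
  have sm: "(\<lambda>k. c * x k) \<in> inspan U (w # ws)" if xy: "x \<in> inspan U (w # ws)" for x c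
  proof -
    obtain a where ab: "(\<lambda>k. x k - a * w k) \<in> inspan U ws" using xy by auto
    have "(\<lambda>k. c * (x k - a * w k)) \<in> inspan U ws" using subsp_smult[OF IH ab] .
    moreover have "(\<lambda>k. c * (x k - a * w k)) = (\<lambda>k. c * x k - (c * a) * w k)"
      by (simp add: fun_eq_iff algebra_simps)
    ultimately show ?thesis by auto
  qed
  show ?case unfolding subsp_def using z ad sm by blast
qed

lemma inspan_mono: "U \<subseteq> U' \<Longrightarrow> inspan U ws \<subseteq> inspan U' ws"
  by (induction ws) auto

lemma steinitz:
  assumes "subsp U"
  shows "finite I \<Longrightarrow> length ws < card I \<Longrightarrow> (\<And>i. i \<in> I \<Longrightarrow> y i \<in> inspan U ws) \<Longrightarrow>
    \<exists>c. (\<exists>i\<in>I. c i \<noteq> 0) \<and> (\<lambda>k. \<Sum>i\<in>I. c i * y i k) \<in> U"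
proof (induction ws arbitrary: I y)
  case Nil
  then obtain i0 where i0: "i0 \<in> I" by (metis card.empty card_ge_0_finite ex_in_conv list.size(3) less_irrefl)
  define c where "c i = (if i = i0 then 1 else (0::complex))" for i
  have e: "\<And>i k. c i * y i k = (if i = i0 then y i k else 0)" unfolding c_def by auto
  have "(\<lambda>k. \<Sum>i\<in>I. c i * y i k) = y i0" using Nil i0 by (simp add: fun_eq_iff e)
  moreover have "y i0 \<in> U" using Nil i0 by simp
  ultimately show ?case using i0 unfolding c_def by (intro exI[of _ c]) (auto simp: c_def)
next
  case (Cons w ws)
  have SU: "subsp (inspan U ws)" using inspan_subsp[OF assms] .
  have "\<forall>i\<in>I. \<exists>a. (\<lambda>k. y i k - a * w k) \<in> inspan U ws" using Cons.prems by auto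
  then obtain a where a: "\<And>i. i \<in> I \<Longrightarrow> (\<lambda>k. y i k - a i * w k) \<in> inspan U ws"
    using bchoice[of I "\<lambda>i a. (\<lambda>k. y i k - a * w k) \<in> inspan U ws"] by blast
  show ?case
  proof (cases "\<forall>i\<in>I. a i = 0")
    case True
    hence "y i \<in> inspan U ws" if "i \<in> I" for i using a[OF that] that by simp
    moreover have "length ws < card I" using Cons.prems by simp
    ultimately show ?thesis using Cons.IH[of I y] Cons.prems(1) by blast
  next
    case False
    then obtain i0 where i0: "i0 \<in> I" "a i0 \<noteq> 0" by blast
    define I' where "I' = I - {i0}"
    define y' where "y' i = (\<lambda>k. y i k - (a i / a i0) * y i0 k)" for i
    have fI': "finite I'" unfolding I'_def using Cons.prems by simp
    have cI': "length ws < card I'" unfolding I'_def using Cons.prems i0 by simp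
    have y'in: "y' i \<in> inspan U ws" if "i \<in> I'" for i
    proof -
      have "(\<lambda>k. (y i k - a i * w k) - (a i / a i0) * (y i0 k - a i0 * w k)) \<in> inspan U ws"
        using that a i0 unfolding I'_def by (intro subsp_diff[OF SU, where x="\<lambda>k. y i k - a i * w k" and y="\<lambda>k. y i0 k - a i0 * w k"]) auto
      moreover have "(\<lambda>k. (y i k - a i * w k) - (a i / a i0) * (y i0 k - a i0 * w k)) = y' i"
        unfolding y'_def using i0 by (simp add: fun_eq_iff algebra_simps)
      ultimately show ?thesis by simp
    qed
    obtain c' i1 where c': "i1 \<in> I'" "c' i1 \<noteq> 0" and inU: "(\<lambda>k. \<Sum>i\<in>I'. c' i * y' i k) \<in> U"
    proof -
      have "\<exists>c. (\<exists>i\<in>I'. c i \<noteq> 0) \<and> (\<lambda>k. \<Sum>i\<in>I'. c i * y' i k) \<in> U"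
        using Cons.IH[of I' y'] fI' cI' y'in by blast
      thus ?thesis using that by blast
    qed
    define c where "c i = (if i = i0 then - (\<Sum>j\<in>I'. c' j * (a j / a i0)) else c' i)" for i
    have "(\<lambda>k. \<Sum>i\<in>I. c i * y i k) = (\<lambda>k. \<Sum>i\<in>I'. c' i * y' i k)"
    proof
      fix k
      have "(\<Sum>i\<in>I. c i * y i k) = c i0 * y i0 k + (\<Sum>i\<in>I'. c i * y i k)"
        unfolding I'_def using i0 Cons.prems by (simp add: sum.remove)
      also have "(\<Sum>i\<in>I'. c i * y i k) = (\<Sum>i\<in>I'. c' i * y i k)"
        unfolding c_def I'_def by (intro sum.cong) auto
      moreover have "(\<Sum>i\<in>I'. c' i * y' i k) = (\<Sum>i\<in>I'. c' i * y i k) - (\<Sum>j\<in>I'. c' j * (a j / a i0)) * y i0 k"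
      proof -
        have "(\<Sum>i\<in>I'. c' i * y' i k) = (\<Sum>i\<in>I'. c' i * y i k - (c' i * (a i / a i0)) * y i0 k)"
          unfolding y'_def by (intro sum.cong) (auto simp: algebra_simps)
        also have "\<dots> = (\<Sum>i\<in>I'. c' i * y i k) - (\<Sum>i\<in>I'. (c' i * (a i / a i0)) * y i0 k)"
          by (rule sum_subtractf)
        also have "(\<Sum>i\<in>I'. (c' i * (a i / a i0)) * y i0 k) = (\<Sum>j\<in>I'. c' j * (a j / a i0)) * y i0 k"
          by (rule sum_distrib_right[symmetric])
        finally show ?thesis .
      qed
      ultimately show "(\<Sum>i\<in>I. c i * y i k) = (\<Sum>i\<in>I'. c' i * y' i k)"
        unfolding c_def by simp
    qed
    moreover have "i1 \<in> I" "c i1 \<noteq> 0" using c' unfolding I'_def c_def by auto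
    ultimately show ?thesis using inU by metis
  qed
qed



lemma Mz_closed: "closed_subspace V \<Longrightarrow> closed_subspace (Mz ` V)"
  by (rule closed_image[OF lin_Mz, of 1 1]) (auto simp: h2_norm_Mz)

lemma beurling_codim:
  assumes V: "closed_subspace V" and inv: "Mz ` V \<subseteq> V"
  shows "\<exists>e\<in>H2. \<forall>x\<in>V. \<exists>a. (\<lambda>k. x k - a * e k) \<in> Mz ` V"
proof -
  note VP = cs_parts[OF V]
  have SV: "subsp V" using V by (rule cs_subsp)
  have NC: "closed_subspace (Mz ` V)" using V by (rule Mz_closed)
  define W where "W = {w \<in> V. \<forall>y\<in>Mz ` V. h2_inner w y = 0}"
  have WH: "w \<in> W \<Longrightarrow> w \<in> H2" for w unfolding W_def using VP(1) by auto
  have proj: "\<exists>p\<in>Mz ` V. (\<lambda>k. x k - p k) \<in> W" if xV: "x \<in> V" for x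
  proof -
    obtain p where p: "p \<in> Mz ` V" "\<forall>y\<in>Mz ` V. h2_inner (\<lambda>k. x k - p k) y = 0"
      using H2_proj[OF NC, of x] xV VP(1) by auto
    have "(\<lambda>k. x k - 1 * p k) \<in> V" using subsp_diff[OF SV xV, of p 1] p inv by auto
    thus ?thesis using p unfolding W_def by auto
  qed
  have Wlin: "(\<lambda>k. w1 k - c * w2 k) \<in> W" if w: "w1 \<in> W" "w2 \<in> W" for w1 w2 c
  proof -
    have "(\<lambda>k. w1 k - c * w2 k) \<in> V" using w unfolding W_def by (auto intro: subsp_diff[OF SV])
    moreover have "h2_inner (\<lambda>k. w1 k - c * w2 k) y = 0" if y: "y \<in> Mz ` V" for y
    proof -
      have yH: "y \<in> H2" using y inv VP(1) by auto
      have "h2_inner (\<lambda>k. w1 k - c * w2 k) y = h2_inner w1 y - c * h2_inner w2 y"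
        using w WH yH by (simp add: inn_diff_left H2_smult inn_smult_left)
      thus ?thesis using w y unfolding W_def by auto
    qed
    ultimately show ?thesis unfolding W_def by auto
  qed
  have Wsm: "(\<lambda>k. c * w k) \<in> W" if w: "w \<in> W" for w c
  proof -
    have "(\<lambda>k. 0 - (-c) * w k) \<in> W"
      using Wlin[OF _ w, of "\<lambda>_. 0" "-c"] subsp_zero[OF SV] inn_zero_left unfolding W_def by auto
    thus ?thesis by simp
  qed
  have dep: "\<exists>a. g = (\<lambda>k. a * f k)" if f: "f \<in> W" "f \<noteq> (\<lambda>_. 0)" and g: "g \<in> W" for f g
  proof -
    have fH: "f \<in> H2" using f WH by auto
    have nf: "nsq f > 0" using nsq_nonneg[OF fH] nsq_eq0[OF fH] f by fastforce
    define t where "t = complex_of_real (1 / sqrt (nsq f))"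
    define u where "u = (\<lambda>k. t * f k)"
    have uW: "u \<in> W" unfolding u_def using Wsm[OF f(1)] .
    have uH: "u \<in> H2" using uW WH by auto
    have "nsq u = (cmod t)\<^sup>2 * nsq f" unfolding u_def by (rule nsq_smult[OF fH])
    also have "(cmod t)\<^sup>2 = 1 / nsq f" unfolding t_def using nf by (simp add: norm_divide power_divide)
    finally have nu: "nsq u = 1" using nf by simp
    have iuu: "h2_inner u u = 1" using inn_self[OF uH] nu by simp
    define c where "c = h2_inner g u"
    define g' where "g' = (\<lambda>k. g k - c * u k)"
    have g'W: "g' \<in> W" unfolding g'_def using Wlin[OF g uW] .
    have g'H: "g' \<in> H2" using g'W WH by auto
    have gH: "g \<in> H2" using g WH by auto
    have ig'u: "h2_inner g' u = 0"
      unfolding g'_def using gH uH iuu by (simp add: inn_diff_left H2_smult inn_smult_left c_def)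
    show ?thesis
    proof (cases "g' = (\<lambda>_. 0)")
      case True
      hence "g = (\<lambda>k. (c * t) * f k)" unfolding g'_def u_def by (simp add: fun_eq_iff)
      thus ?thesis by blast
    next
      case False
      have ng: "nsq g' > 0" using nsq_nonneg[OF g'H] nsq_eq0[OF g'H] False by fastforce
      define s where "s = complex_of_real (1 / sqrt (nsq g'))"
      define v where "v = (\<lambda>k. s * g' k)"
      have vW: "v \<in> W" unfolding v_def using Wsm[OF g'W] .
      have vH: "v \<in> H2" using vW WH by auto
      have "nsq v = (cmod s)\<^sup>2 * nsq g'" unfolding v_def by (rule nsq_smult[OF g'H])
      also have "(cmod s)\<^sup>2 = 1 / nsq g'" unfolding s_def using ng by (simp add: norm_divide power_divide)
      finally have nv: "nsq v = 1" using ng by simp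
      have "h2_inner u v = cnj s * h2_inner u g'" unfolding v_def using uH g'H by (simp add: inn_smult_right)
      also have "h2_inner u g' = 0" using inn_cnj[OF g'H uH] ig'u by simp
      finally have iuv: "h2_inner u v = 0" by simp
      have "False"
        using beurling_core[OF V inv, of u v] uW vW nu nv iuv unfolding W_def by blast
      thus ?thesis ..
    qed
  qed
  show ?thesis
  proof (cases "\<forall>w\<in>W. w = (\<lambda>_. 0)")
    case True
    show ?thesis
    proof (intro bexI[of _ "\<lambda>_. 0"] ballI)
      fix x assume xV: "x \<in> V"
      obtain p where p: "p \<in> Mz ` V" "(\<lambda>k. x k - p k) \<in> W" using proj[OF xV] by blast
      hence "(\<lambda>k. x k - p k) = (\<lambda>_. 0)" using True by blast
      hence "x = p" by (simp add: fun_eq_iff)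
      thus "\<exists>a. (\<lambda>k. x k - a * 0) \<in> Mz ` V" using p by simp
    qed (rule H2_zero)
  next
    case False
    then obtain f where f: "f \<in> W" "f \<noteq> (\<lambda>_. 0)" by blast
    show ?thesis
    proof (intro bexI[of _ f] ballI)
      fix x assume xV: "x \<in> V"
      obtain p where p: "p \<in> Mz ` V" "(\<lambda>k. x k - p k) \<in> W" using proj[OF xV] by blast
      then obtain a where "(\<lambda>k. x k - p k) = (\<lambda>k. a * f k)" using dep[OF f] by blast
      hence "(\<lambda>k. x k - a * f k) = p" by (simp add: fun_eq_iff algebra_simps)
      thus "\<exists>a. (\<lambda>k. x k - a * f k) \<in> Mz ` V" using p by metis
    qed (use f WH in auto)
  qed
qed

fun wsf :: "(nat \<Rightarrow> complex) \<Rightarrow> nat \<Rightarrow> (nat \<Rightarrow> complex) list" where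
  "wsf e 0 = []"
| "wsf e (Suc K) = e # map Mz (wsf e K)"

lemma length_wsf: "length (wsf e K) = K"
  by (induction K) auto

lemma wsf_H2: "e \<in> H2 \<Longrightarrow> set (wsf e K) \<subseteq> H2"
  by (induction K) (auto simp: Mz_H2)

lemma lin_inspan:
  assumes T: "lin T" and U: "U \<subseteq> H2"
  shows "set ws \<subseteq> H2 \<Longrightarrow> x \<in> inspan U ws \<Longrightarrow> x \<in> H2 \<and> T x \<in> inspan (T ` U) (map T ws)"
proof (induction ws arbitrary: x)
  case Nil thus ?case using U by auto
next
  case (Cons w ws)
  obtain a where a: "(\<lambda>k. x k - a * w k) \<in> inspan U ws" using Cons.prems by auto
  have wH: "w \<in> H2" using Cons.prems by auto
  have IH: "(\<lambda>k. x k - a * w k) \<in> H2" "T (\<lambda>k. x k - a * w k) \<in> inspan (T ` U) (map T ws)"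
    using Cons.IH[OF _ a] Cons.prems by auto
  have "(\<lambda>k. (x k - a * w k) + a * w k) \<in> H2" using IH(1) wH by (intro H2_add H2_smult)
  hence xH: "x \<in> H2" by simp
  have "T (\<lambda>k. x k - a * w k) = (\<lambda>k. T x k - a * T w k)"
    using lin_diff[OF T xH H2_smult[OF wH]] lin_smult[OF T wH] by simp
  thus ?case using IH xH by auto
qed

lemma iter_span:
  assumes V: "closed_subspace V" and inv: "Mz ` V \<subseteq> V" and eH: "e \<in> H2"
    and cod: "\<forall>x\<in>V. \<exists>a. (\<lambda>k. x k - a * e k) \<in> Mz ` V"
  shows "x \<in> V \<Longrightarrow> x \<in> inspan ((Mz ^^ K) ` V) (wsf e K)"
proof (induction K arbitrary: x)
  case 0
  have "(Mz ^^ 0) x = x" by simp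
  thus ?case using 0 by (metis image_eqI inspan.simps(1) wsf.simps(1))
next
  case (Suc K)
  note VP = cs_parts[OF V]
  obtain a x1 where a: "(\<lambda>k. x k - a * e k) = Mz x1" "x1 \<in> V" using cod Suc.prems by blast
  have "x1 \<in> inspan ((Mz ^^ K) ` V) (wsf e K)" using Suc.IH[OF a(2)] .
  moreover have "(Mz ^^ K) ` V \<subseteq> H2" using VP(1) Mz_pow_H2 by auto
  ultimately have "Mz x1 \<in> inspan (Mz ` (Mz ^^ K) ` V) (map Mz (wsf e K))"
    using lin_inspan[OF lin_Mz, of "(Mz ^^ K) ` V" "wsf e K" x1] wsf_H2[OF eH] by blast
  moreover have "Mz ` (Mz ^^ K) ` V = (Mz ^^ Suc K) ` V" by (simp add: image_comp)
  ultimately have "(\<lambda>k. x k - a * e k) \<in> inspan ((Mz ^^ Suc K) ` V) (map Mz (wsf e K))"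
    using a by simp
  thus ?case by auto
qed



lemma lin_vsum: "finite I \<Longrightarrow> lin T \<Longrightarrow> (\<And>i. i \<in> I \<Longrightarrow> y i \<in> H2) \<Longrightarrow>
   T (\<lambda>k. \<Sum>i\<in>I. y i k) = (\<lambda>k. \<Sum>i\<in>I. T (y i) k)"
  using lin_sum[of I T y "\<lambda>_. 1"] by simp

lemma H2_vsum: "finite I \<Longrightarrow> (\<And>i. i \<in> I \<Longrightarrow> y i \<in> H2) \<Longrightarrow> (\<lambda>k. \<Sum>i\<in>I. y i k) \<in> H2"
  using H2_sum[of I y "\<lambda>_. 1"] by simp

lemma subsp_vsum: "finite I \<Longrightarrow> subsp U \<Longrightarrow> (\<And>i. i \<in> I \<Longrightarrow> y i \<in> U) \<Longrightarrow> (\<lambda>k. \<Sum>i\<in>I. y i k) \<in> U"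
  using subsp_sum[of I U y "\<lambda>_. 1"] by simp

lemma zpow_H2_0: "zpow_H2 0 = H2" by (simp add: zpow_H2_def)

lemma zpow_H2_mono: "j \<le> m \<Longrightarrow> zpow_H2 m \<subseteq> zpow_H2 j"
  by (auto simp: zpow_H2_def)

locale pert =
  fixes S :: "(nat \<Rightarrow> complex) \<Rightarrow> nat \<Rightarrow> complex" and n :: nat
    and M :: "(nat \<Rightarrow> complex) set" and C D :: real
  assumes linS: "lin S"
    and bndS: "\<forall>x\<in>H2. h2_norm (S x) \<le> C * h2_norm x"
    and belS: "\<forall>x\<in>H2. h2_norm x \<le> D * h2_norm (S x)"
    and ordS: "\<And>k x. x \<in> zpow_H2 k \<Longrightarrow> S x \<in> zpow_H2 (Suc k)"
    and tailS: "\<And>x. x \<in> zpow_H2 n \<Longrightarrow> S x = Mz x"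
    and Mcs: "closed_subspace M" and Minv: "S ` M \<subseteq> M" and Mnz: "M \<noteq> {\<lambda>_. 0}"
begin

lemma MH: "M \<subseteq> H2" using cs_parts[OF Mcs] by blast
lemma Msub: "subsp M" using Mcs by (rule cs_subsp)

lemma injS: assumes "x \<in> H2" "y \<in> H2" "S x = S y" shows "x = y"
proof -
  have d: "(\<lambda>k. x k - y k) \<in> H2" using assms by (intro H2_diff)
  have "S (\<lambda>k. x k - y k) = (\<lambda>_. 0)" using lin_diff[OF linS assms(1,2)] assms(3) by simp
  hence "h2_norm (\<lambda>k. x k - y k) \<le> D * h2_norm (\<lambda>_. 0)" using belS d by metis
  also have "h2_norm (\<lambda>_. 0) = 0" using h2_norm_eq0[OF H2_zero] by simp
  finally have "h2_norm (\<lambda>k. x k - y k) = 0" using h2_norm_nonneg[OF d] by simp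
  hence "(\<lambda>k. x k - y k) = (\<lambda>_. 0)" using h2_norm_eq0[OF d] by simp
  thus ?thesis by (simp add: fun_eq_iff)
qed

lemma linSpow: "lin (S ^^ j)" using linS by (rule lin_funpow)

lemma Spow_M: "x \<in> M \<Longrightarrow> (S ^^ j) x \<in> M"
  by (induction j) (use Minv in auto)

lemma Spow_ord: "x \<in> zpow_H2 m \<Longrightarrow> (S ^^ j) x \<in> zpow_H2 (m + j)"
  by (induction j) (auto simp: ordS)

lemma Spow_closed: "closed_subspace ((S ^^ j) ` M)"
proof (induction j)
  case 0 thus ?case using Mcs by simp
next
  case (Suc j)
  have "closed_subspace (S ` (S ^^ j) ` M)" using closed_image[OF linS bndS belS Suc] .
  thus ?case by (simp add: image_comp)
qed

lemma SM_ne: "S ` M \<noteq> M"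
proof
  assume eq: "S ` M = M"
  have "M \<subseteq> zpow_H2 k" for k
  proof (induction k)
    case 0 thus ?case using MH by (simp add: zpow_H2_0)
  next
    case (Suc k)
    show ?case
    proof
      fix x assume "x \<in> M"
      then obtain y where "y \<in> M" "x = S y" using eq by blast
      thus "x \<in> zpow_H2 (Suc k)" using Suc ordS by blast
    qed
  qed
  hence "x = (\<lambda>_. 0)" if "x \<in> M" for x using that by (auto simp: zpow_H2_def fun_eq_iff)
  hence "M = {\<lambda>_. 0}" using cs_parts(2)[OF Mcs] by blast
  thus False using Mnz by simp
qed

abbreviation "OD \<equiv> orth_diff M (S ` M)"

lemma O_lin: "x \<in> OD \<Longrightarrow> y \<in> OD \<Longrightarrow> (\<lambda>k. a * x k + b * y k) \<in> OD"
proof -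
  assume xy: "x \<in> OD" "y \<in> OD"
  have H: "x \<in> H2" "y \<in> H2" using xy MH unfolding orth_diff_def by auto
  have "(\<lambda>k. a * x k + b * y k) \<in> M" using xy Msub unfolding orth_diff_def
    by (auto intro!: subsp_add subsp_smult)
  moreover have "h2_inner (\<lambda>k. a * x k + b * y k) z = 0" if z: "z \<in> S ` M" for z
  proof -
    have zH: "z \<in> H2" using z Minv MH by auto
    have "h2_inner (\<lambda>k. a * x k + b * y k) z = a * h2_inner x z + b * h2_inner y z"
      using H zH by (simp add: inn_add_left H2_smult inn_smult_left)
    thus ?thesis using xy z unfolding orth_diff_def by auto
  qed
  ultimately show ?thesis unfolding orth_diff_def by blast
qed

lemma lower: "\<exists>e\<in>OD. e \<noteq> (\<lambda>_. 0)"
proof -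
  obtain x where x: "x \<in> M" "x \<notin> S ` M" using SM_ne Minv by blast
  have xH: "x \<in> H2" using x MH by auto
  obtain p where p: "p \<in> S ` M" "\<forall>y\<in>S ` M. h2_inner (\<lambda>k. x k - p k) y = 0"
    using H2_proj[OF closed_image[OF linS bndS belS Mcs] xH] by blast
  have "(\<lambda>k. x k - 1 * p k) \<in> M" using subsp_diff[OF Msub x(1), of p 1] p Minv by auto
  hence "(\<lambda>k. x k - p k) \<in> OD" using p unfolding orth_diff_def by auto
  moreover have "(\<lambda>k. x k - p k) \<noteq> (\<lambda>_. 0)"
  proof
    assume "(\<lambda>k. x k - p k) = (\<lambda>_. 0)"
    hence "x = p" by (simp add: fun_eq_iff)
    thus False using x p by simp
  qed
  ultimately show ?thesis by blast
qed

lemma tower: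
  assumes e: "e1 \<in> M" "e2 \<in> M"
    and ind: "\<And>a b. (\<lambda>k. a * e1 k + b * e2 k) \<in> S ` M \<Longrightarrow> a = 0 \<and> b = 0"
  shows "(\<lambda>k. \<Sum>j<J. (S ^^ j) (\<lambda>k. a j * e1 k + b j * e2 k) k) \<in> (S ^^ J) ` M \<Longrightarrow> \<forall>j<J. a j = 0 \<and> b j = 0"
proof (induction J arbitrary: a b)
  case 0 thus ?case by simp
next
  case (Suc J)
  define w where "w j = (\<lambda>k. a j * e1 k + b j * e2 k)" for j
  have wM: "w j \<in> M" for j unfolding w_def using e Msub by (intro subsp_add subsp_smult)
  have wH: "w j \<in> H2" for j using wM MH by auto
  obtain y0 where y0: "y0 \<in> M" "(\<lambda>k. \<Sum>j<Suc J. (S ^^ j) (w j) k) = (S ^^ Suc J) y0"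
    using Suc.prems unfolding w_def by auto
  define R where "R = (\<lambda>k. \<Sum>j<J. (S ^^ j) (w (Suc j)) k)"
  have RM: "R \<in> M" unfolding R_def using Msub by (intro subsp_vsum Spow_M wM) auto
  have RH: "R \<in> H2" using RM MH by auto
  have yJ: "(S ^^ J) y0 \<in> M" using Spow_M[OF y0(1)] .
  have yJH: "(S ^^ J) y0 \<in> H2" using yJ MH by auto
  have "(\<lambda>k. \<Sum>j<J. (S ^^ Suc j) (w (Suc j)) k) = (\<lambda>k. \<Sum>j<J. S ((S ^^ j) (w (Suc j))) k)" by simp
  also have "\<dots> = S R" unfolding R_def
    using lin_H2[OF linSpow wH] by (intro lin_vsum[symmetric] linS) auto
  finally have sR: "(\<lambda>k. \<Sum>j<J. (S ^^ Suc j) (w (Suc j)) k) = S R" .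
  have "(\<lambda>k. w 0 k + S R k) = S ((S ^^ J) y0)"
  proof -
    have "(\<lambda>k. \<Sum>j<Suc J. (S ^^ j) (w j) k) = (\<lambda>k. w 0 k + (\<Sum>j<J. (S ^^ Suc j) (w (Suc j)) k))"
      unfolding sum.lessThan_Suc_shift by simp
    thus ?thesis using y0(2) sR by (simp add: fun_eq_iff)
  qed
  hence w0: "w 0 = (\<lambda>k. S ((S ^^ J) y0) k - S R k)" by (simp add: fun_eq_iff algebra_simps)
  also have "\<dots> = S (\<lambda>k. (S ^^ J) y0 k - R k)" using lin_diff[OF linS yJH RH] by simp
  finally have "w 0 \<in> S ` M" using subsp_diff[OF Msub yJ RM, of 1] by simp
  hence ab0: "a 0 = 0 \<and> b 0 = 0" using ind unfolding w_def by blast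
  hence "w 0 = (\<lambda>_. 0)" unfolding w_def by simp
  hence "S R = S ((S ^^ J) y0)" using w0 by (simp add: fun_eq_iff)
  hence "R = (S ^^ J) y0" using injS RH yJH by blast
  hence "R \<in> (S ^^ J) ` M" using y0(1) by blast
  hence "\<forall>j<J. a (Suc j) = 0 \<and> b (Suc j) = 0"
    using Suc.IH[of "\<lambda>j. a (Suc j)" "\<lambda>j. b (Suc j)"] unfolding R_def w_def by blast
  thus ?case using ab0 by (auto simp: less_Suc_eq_0_disj)
qed

end



context pert begin

lemma Mp_closed: "closed_subspace (M \<inter> zpow_H2 n)"
proof -
  note MP = cs_parts[OF Mcs]
  have sub: "M \<inter> zpow_H2 n \<subseteq> H2" using MP(1) by auto
  have z: "(\<lambda>_. 0) \<in> M \<inter> zpow_H2 n" using MP(2) H2_zero by (auto simp: zpow_H2_def)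
  have ad: "(\<lambda>k. x k + y k) \<in> M \<inter> zpow_H2 n" if "x \<in> M \<inter> zpow_H2 n" "y \<in> M \<inter> zpow_H2 n" for x y
    using that MP(3) H2_add by (auto simp: zpow_H2_def)
  have sm: "(\<lambda>k. c * x k) \<in> M \<inter> zpow_H2 n" if "x \<in> M \<inter> zpow_H2 n" for x c
    using that MP(4) H2_smult by (auto simp: zpow_H2_def)
  have lim: "x \<in> M \<inter> zpow_H2 n" if s: "\<forall>j. s j \<in> M \<inter> zpow_H2 n" and x: "x \<in> H2"
    and l: "(\<lambda>j. h2_norm (\<lambda>k. s j k - x k)) \<longlonglongrightarrow> 0" for s x
  proof -
    have "x \<in> M" using MP(5)[of s x] s x l by blast
    moreover have "x k = 0" if k: "k < n" for k
    proof -
      have "cmod (x k) \<le> 0"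
      proof (rule LIMSEQ_le_const[OF l])
        show "\<exists>N. \<forall>j\<ge>N. cmod (x k) \<le> h2_norm (\<lambda>k. s j k - x k)"
        proof (intro exI allI impI)
          fix j
          have sj: "s j \<in> H2" "s j k = 0" using s k by (auto simp: zpow_H2_def)
          have "cmod (s j k - x k) \<le> h2_norm (\<lambda>k. s j k - x k)"
            using coord_le_norm[OF H2_diff[OF sj(1) x]] .
          thus "cmod (x k) \<le> h2_norm (\<lambda>k. s j k - x k)" using sj by simp
        qed
      qed
      thus ?thesis by simp
    qed
    ultimately show ?thesis using x by (auto simp: zpow_H2_def)
  qed
  show ?thesis unfolding closed_subspace_def using sub z ad sm lim by blast
qed

lemma Mp_inv: "Mz ` (M \<inter> zpow_H2 n) \<subseteq> M \<inter> zpow_H2 n"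
proof
  fix y assume "y \<in> Mz ` (M \<inter> zpow_H2 n)"
  then obtain x where x: "x \<in> M" "x \<in> zpow_H2 n" "y = Mz x" by blast
  have "y = S x" using tailS[OF x(2)] x(3) by simp
  hence "y \<in> M" using Minv x(1) by blast
  moreover have "y \<in> zpow_H2 n" using ordS[OF x(2)] zpow_H2_mono[of n "Suc n"] \<open>y = S x\<close> by auto
  ultimately show "y \<in> M \<inter> zpow_H2 n" by blast
qed

lemma Mzpow_eq: "x \<in> M \<inter> zpow_H2 n \<Longrightarrow> (Mz ^^ K) x = (S ^^ K) x \<and> (S ^^ K) x \<in> M \<inter> zpow_H2 n"
proof (induction K)
  case 0 thus ?case by simp
next
  case (Suc K)
  hence e: "(Mz ^^ K) x = (S ^^ K) x" and m: "(S ^^ K) x \<in> M \<inter> zpow_H2 n" by auto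
  have "(Mz ^^ Suc K) x = Mz ((S ^^ K) x)" using e by simp
  also have "\<dots> = S ((S ^^ K) x)" using tailS m by simp
  finally have "(Mz ^^ Suc K) x = (S ^^ Suc K) x" by simp
  moreover have "(S ^^ Suc K) x \<in> M \<inter> zpow_H2 n"
    using Mp_inv m \<open>(Mz ^^ Suc K) x = (S ^^ Suc K) x\<close> e
    by (metis Mz_pow_inv Suc.prems)
  ultimately show ?case by simp
qed

lemma upper:
  assumes e1: "e1 \<in> OD" "e1 \<noteq> (\<lambda>_. 0)" and e2: "e2 \<in> OD"
  shows "\<exists>a. e2 = (\<lambda>k. a * e1 k)"
proof (rule ccontr)
  assume nd: "\<not> (\<exists>a. e2 = (\<lambda>k. a * e1 k))"
  have e1M: "e1 \<in> M" and e2M: "e2 \<in> M" using e1 e2 unfolding orth_diff_def by auto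
  have ind: "a = 0 \<and> b = 0" if w: "(\<lambda>k. a * e1 k + b * e2 k) \<in> S ` M" for a b
  proof -
    define v where "v = (\<lambda>k. a * e1 k + b * e2 k)"
    have vO: "v \<in> OD" unfolding v_def using O_lin[OF e1(1) e2] .
    have vH: "v \<in> H2" using vO MH unfolding orth_diff_def by auto
    have "h2_inner v v = 0" using vO w unfolding orth_diff_def v_def by blast
    hence "nsq v = 0" using inn_self[OF vH] by simp
    hence v0: "v = (\<lambda>_. 0)" using nsq_eq0[OF vH] by simp
    show ?thesis
    proof (cases "b = 0")
      case False
      have "e2 = (\<lambda>k. (- a / b) * e1 k)"
        using v0 False unfolding v_def by (auto simp: fun_eq_iff field_simps) (metis add_eq_0_iff mult.commute)
      thus ?thesis using nd by blast
    next
      case True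
      obtain k where "e1 k \<noteq> 0" using e1(2) by auto
      moreover have "a * e1 k = 0" using v0 True unfolding v_def by (metis mult_zero_left add_0_right)
      ultimately show ?thesis using True by simp
    qed
  qed
  define Mp where "Mp = M \<inter> zpow_H2 n"
  obtain e' where e'H: "e' \<in> H2" and cod: "\<forall>x\<in>Mp. \<exists>a. (\<lambda>k. x k - a * e' k) \<in> Mz ` Mp"
    using beurling_codim[OF Mp_closed Mp_inv] unfolding Mp_def by blast
  define J0 where "J0 = Suc n"
  define K where "K = n + J0"
  define I where "I = {n..<n + J0} \<times> (UNIV :: bool set)"
  define E where "E b = (if b then e2 else e1)" for b
  define y where "y p = (S ^^ fst p) (E (snd p))" for p
  define U where "U = (S ^^ K) ` M"
  have EM: "E b \<in> M" for b unfolding E_def using e1M e2M by simp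
  have EH: "E b \<in> H2" for b using EM MH by auto
  have SU: "subsp U" unfolding U_def using Spow_closed by (rule cs_subsp)
  have fI: "finite I" unfolding I_def by simp
  have cI: "card I = 2 * J0" unfolding I_def by (simp add: card_cartesian_product)
  have len: "length (wsf e' K) < card I" unfolding K_def J0_def cI by (simp add: length_wsf)
  have yin: "y p \<in> inspan U (wsf e' K)" if pI: "p \<in> I" for p
  proof -
    have "y p \<in> M" unfolding y_def using Spow_M[OF EM] .
    moreover have "y p \<in> zpow_H2 n"
    proof -
      have "E (snd p) \<in> zpow_H2 0" using EH by (simp add: zpow_H2_0)
      hence "y p \<in> zpow_H2 (0 + fst p)" unfolding y_def by (rule Spow_ord)
      moreover have "n \<le> fst p" using pI unfolding I_def by auto
      ultimately show ?thesis using zpow_H2_mono by auto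
    qed
    ultimately have yMp: "y p \<in> Mp" unfolding Mp_def by blast
    have "y p \<in> inspan ((Mz ^^ K) ` Mp) (wsf e' K)"
      using iter_span[OF Mp_closed[folded Mp_def] Mp_inv[folded Mp_def] e'H cod yMp] .
    moreover have "(Mz ^^ K) ` Mp \<subseteq> U"
      unfolding U_def Mp_def using Mzpow_eq by (auto intro!: image_eqI)
    ultimately show ?thesis using inspan_mono by blast
  qed
  obtain c p0 where p0: "p0 \<in> I" "c p0 \<noteq> 0" and cU: "(\<lambda>k. \<Sum>p\<in>I. c p * y p k) \<in> U"
  proof -
    have "\<exists>c. (\<exists>i\<in>I. c i \<noteq> 0) \<and> (\<lambda>k. \<Sum>i\<in>I. c i * y i k) \<in> U"
      using steinitz[OF SU fI len, of y] yin by blast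
    thus ?thesis using that by blast
  qed
  define a where "a j = (if n \<le> j then c (j, False) else 0)" for j
  define b where "b j = (if n \<le> j then c (j, True) else 0)" for j
  have "(\<lambda>k. \<Sum>p\<in>I. c p * y p k) = (\<lambda>k. \<Sum>j<K. (S ^^ j) (\<lambda>k. a j * e1 k + b j * e2 k) k)"
  proof
    fix k
    have "(\<Sum>p\<in>I. c p * y p k) = (\<Sum>j\<in>{n..<n + J0}. \<Sum>bb\<in>UNIV. c (j, bb) * y (j, bb) k)"
      unfolding I_def by (simp add: sum.cartesian_product)
    also have "\<dots> = (\<Sum>j\<in>{n..<n + J0}. c (j, False) * (S ^^ j) e1 k + c (j, True) * (S ^^ j) e2 k)"
      by (simp add: UNIV_bool y_def E_def add.commute)
    also have "\<dots> = (\<Sum>j\<in>{n..<K}. a j * (S ^^ j) e1 k + b j * (S ^^ j) e2 k)"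
      unfolding K_def a_def b_def by (intro sum.cong) auto
    also have "\<dots> = (\<Sum>j\<in>{0..<K}. a j * (S ^^ j) e1 k + b j * (S ^^ j) e2 k)"
    proof -
      have "(\<Sum>j\<in>{0..<n}. a j * (S ^^ j) e1 k + b j * (S ^^ j) e2 k) = 0"
        unfolding a_def b_def by simp
      moreover have "(\<Sum>j\<in>{0..<n}. a j * (S ^^ j) e1 k + b j * (S ^^ j) e2 k)
          + (\<Sum>j\<in>{n..<K}. a j * (S ^^ j) e1 k + b j * (S ^^ j) e2 k)
          = (\<Sum>j\<in>{0..<K}. a j * (S ^^ j) e1 k + b j * (S ^^ j) e2 k)"
        unfolding K_def by (rule sum.atLeastLessThan_concat) auto
      ultimately show ?thesis by simp
    qed
    also have "\<dots> = (\<Sum>j<K. (S ^^ j) (\<lambda>k. a j * e1 k + b j * e2 k) k)"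
    proof (rule sum.cong)
      show "{0..<K} = {..<K}" by auto
    next
      fix j
      have e1H: "e1 \<in> H2" and e2H: "e2 \<in> H2" using e1M e2M MH by auto
      have "(S ^^ j) (\<lambda>k. a j * e1 k + b j * e2 k) = (\<lambda>k. (S ^^ j) (\<lambda>k. a j * e1 k) k + (S ^^ j) (\<lambda>k. b j * e2 k) k)"
        using lin_add[OF linSpow H2_smult[OF e1H] H2_smult[OF e2H]] .
      also have "\<dots> = (\<lambda>k. a j * (S ^^ j) e1 k + b j * (S ^^ j) e2 k)"
        using lin_smult[OF linSpow e1H] lin_smult[OF linSpow e2H] by simp
      finally show "a j * (S ^^ j) e1 k + b j * (S ^^ j) e2 k = (S ^^ j) (\<lambda>k. a j * e1 k + b j * e2 k) k"
        by simp
    qed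
    finally show "(\<Sum>p\<in>I. c p * y p k) = (\<Sum>j<K. (S ^^ j) (\<lambda>k. a j * e1 k + b j * e2 k) k)" .
  qed
  hence "(\<lambda>k. \<Sum>j<K. (S ^^ j) (\<lambda>k. a j * e1 k + b j * e2 k) k) \<in> (S ^^ K) ` M"
    using cU unfolding U_def by simp
  hence z: "\<forall>j<K. a j = 0 \<and> b j = 0" using tower[OF e1M e2M ind] by blast
  obtain j bb where p0e: "p0 = (j, bb)" "n \<le> j" "j < K" using p0(1) unfolding I_def K_def by auto
  have "c p0 = 0" using z p0e unfolding a_def b_def by (cases bb) auto
  thus False using p0 by simp
qed

lemma dim_one_OD: "dim_one OD"
proof -
  obtain e where e: "e \<in> OD" "e \<noteq> (\<lambda>_. 0)" using lower by blast
  have "OD = {(\<lambda>k. c * e k) | c. True}"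
  proof
    show "OD \<subseteq> {(\<lambda>k. c * e k) | c. True}" using upper[OF e] by blast
    show "{(\<lambda>k. c * e k) | c. True} \<subseteq> OD"
    proof
      fix x assume "x \<in> {(\<lambda>k. c * e k) | c. True}"
      then obtain c where c: "x = (\<lambda>k. c * e k)" by blast
      have "(\<lambda>k. c * e k + 0 * e k) \<in> OD" using O_lin[OF e(1) e(1)] .
      thus "x \<in> OD" using c by simp
    qed
  qed
  thus ?thesis unfolding dim_one_def using e(2) by blast
qed

end



lemma F_tail:
  assumes F: "bounded_op F" and z: "\<forall>m\<ge>n. F (zpow m) = (\<lambda>_. 0)" and x: "x \<in> zpow_H2 n"
  shows "F x = (\<lambda>_. 0)"
proof -
  have linF: "lin F" using F by (rule bounded_op_lin)
  obtain C where C: "\<forall>x\<in>H2. h2_norm (F x) \<le> C * h2_norm x" using bounded_op_bound[OF F] by blast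
  have xH: "x \<in> H2" and x0: "\<And>k. k < n \<Longrightarrow> x k = 0" using x by (auto simp: zpow_H2_def)
  define tr where "tr N = (\<lambda>k. if k < N then x k else 0)" for N
  have trH: "tr N \<in> H2" for N unfolding tr_def by (rule H2_fin[of N]) auto
  have Ftr: "F (tr N) = (\<lambda>_. 0)" for N
  proof (induction N)
    case 0
    have "tr 0 = (\<lambda>_. 0)" unfolding tr_def by simp
    thus ?case using lin_zero[OF linF] by simp
  next
    case (Suc N)
    have e: "tr (Suc N) = (\<lambda>k. tr N k + x N * zpow N k)"
      unfolding tr_def zpow_def by (auto simp: fun_eq_iff less_Suc_eq)
    have "F (tr (Suc N)) = (\<lambda>k. F (tr N) k + F (\<lambda>k. x N * zpow N k) k)"
      unfolding e by (rule lin_add[OF linF trH H2_smult[OF zpow_H2]])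
    also have "F (\<lambda>k. x N * zpow N k) = (\<lambda>k. x N * F (zpow N) k)" by (rule lin_smult[OF linF zpow_H2])
    also have "(\<lambda>k. x N * F (zpow N) k) = (\<lambda>_. 0)"
    proof (cases "n \<le> N")
      case True thus ?thesis using z by simp
    next
      case False thus ?thesis using x0 by simp
    qed
    finally show ?case using Suc by simp
  qed
  have dt: "(\<lambda>k. x k - tr N k) \<in> H2" for N using xH trH by (rule H2_diff)
  have nt: "nsq (\<lambda>k. x k - tr N k) = nsq x - (\<Sum>k<N. (cmod (x k))\<^sup>2)" for N
  proof -
    define f where "f k = (cmod (x k))\<^sup>2" for k
    have sf: "summable f" using xH unfolding f_def H2_iff .
    define h where "h k = (if k < N then f k else 0)" for k
    have sh: "summable h" unfolding h_def by (rule summable_finite[of "{..<N}"]) auto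
    have hs: "suminf h = (\<Sum>k<N. f k)" unfolding h_def by (subst suminf_finite[of "{..<N}"]) auto
    have "(\<lambda>k. (cmod (x k - tr N k))\<^sup>2) = (\<lambda>k. f k - h k)" unfolding f_def h_def tr_def by auto
    hence "nsq (\<lambda>k. x k - tr N k) = suminf (\<lambda>k. f k - h k)" unfolding nsq_def by simp
    also have "\<dots> = suminf f - suminf h" using sf sh by (rule suminf_diff[symmetric])
    finally show ?thesis using hs unfolding f_def nsq_def by simp
  qed
  have "(\<lambda>N. nsq x - (\<Sum>k<N. (cmod (x k))\<^sup>2)) \<longlonglongrightarrow> nsq x - nsq x"
    using xH unfolding nsq_def H2_iff by (intro tendsto_diff tendsto_const summable_LIMSEQ)
  hence "(\<lambda>N. nsq (\<lambda>k. x k - tr N k)) \<longlonglongrightarrow> 0" using nt by simp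
  hence "(\<lambda>N. sqrt (nsq (\<lambda>k. x k - tr N k))) \<longlonglongrightarrow> sqrt 0" by (rule tendsto_real_sqrt)
  hence tl: "(\<lambda>N. h2_norm (\<lambda>k. x k - tr N k)) \<longlonglongrightarrow> 0" by (simp add: h2_norm_nsq)
  have bnd: "h2_norm (F x) \<le> C * h2_norm (\<lambda>k. x k - tr N k)" for N
  proof -
    have "F (\<lambda>k. x k - tr N k) = (\<lambda>k. F x k - F (tr N) k)" by (rule lin_diff[OF linF xH trH])
    hence "F (\<lambda>k. x k - tr N k) = F x" using Ftr by simp
    thus ?thesis using C dt by metis
  qed
  have "h2_norm (F x) \<le> C * 0"
    by (rule LIMSEQ_le_const[OF tendsto_mult[OF tendsto_const tl]]) (use bnd in auto)
  hence "h2_norm (F x) = 0" using h2_norm_nonneg[OF lin_H2[OF linF xH]] by simp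
  thus ?thesis using h2_norm_eq0[OF lin_H2[OF linF xH]] by simp
qed

theorem theorem3p1:
  fixes n :: nat and F :: "(nat \<Rightarrow> complex) \<Rightarrow> nat \<Rightarrow> complex"
    and M :: "(nat \<Rightarrow> complex) set"
  assumes "n \<ge> 1"
    and "n_perturbation n F"
    and "closed_subspace M"
    and "M \<noteq> {\<lambda>_. 0}"
    and "(\<lambda>x. (\<lambda>k. Mz x k + F x k)) ` M \<subseteq> M"
  shows "dim_one (orth_diff M ((\<lambda>x. (\<lambda>k. Mz x k + F x k)) ` M))"
proof -
  define S where "S = (\<lambda>x. (\<lambda>k. Mz x k + F x k))"
  have F: "bounded_op F" and Fz: "\<forall>m\<ge>n. F (zpow m) = (\<lambda>_. 0)"
    and Fp: "\<forall>m. F ` zpow_H2 m \<subseteq> zpow_poly (m + 1)" and li: "left_invertible S"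
    using assms(2) unfolding n_perturbation_def S_def by auto
  have linF: "lin F" using F by (rule bounded_op_lin)
  obtain CF where CF: "\<forall>x\<in>H2. h2_norm (F x) \<le> CF * h2_norm x" using bounded_op_bound[OF F] by blast
  have SH: "S x \<in> H2" if "x \<in> H2" for x
    unfolding S_def using that by (intro H2_add Mz_H2 lin_H2[OF linF])
  have linS: "lin S"
  proof -
    have "\<forall>x\<in>H2. \<forall>y\<in>H2. S (\<lambda>k. x k + y k) = (\<lambda>k. S x k + S y k)"
      unfolding S_def using lin_add[OF linF] lin_add[OF lin_Mz] by (auto simp: fun_eq_iff)
    moreover have "\<forall>c. \<forall>x\<in>H2. S (\<lambda>k. c * x k) = (\<lambda>k. c * S x k)"
      unfolding S_def using lin_smult[OF linF] lin_smult[OF lin_Mz] by (auto simp: fun_eq_iff algebra_simps)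
    ultimately show ?thesis unfolding lin_def using SH by blast
  qed
  have bndS: "\<forall>x\<in>H2. h2_norm (S x) \<le> (1 + CF) * h2_norm x"
  proof
    fix x :: "nat \<Rightarrow> complex" assume xH: "x \<in> H2"
    have "h2_norm (S x) \<le> h2_norm (Mz x) + h2_norm (F x)"
      unfolding S_def using norm_triangle[OF Mz_H2[OF xH] lin_H2[OF linF xH]] .
    also have "\<dots> \<le> h2_norm x + CF * h2_norm x" using CF xH h2_norm_Mz[OF xH] by auto
    finally show "h2_norm (S x) \<le> (1 + CF) * h2_norm x" by (simp add: algebra_simps)
  qed
  obtain L where L: "bounded_op L" "\<forall>x\<in>H2. L (S x) = x" using li unfolding left_invertible_def by blast
  obtain CL where CL: "\<forall>x\<in>H2. h2_norm (L x) \<le> CL * h2_norm x" using bounded_op_bound[OF L(1)] by blast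
  have belS: "\<forall>x\<in>H2. h2_norm x \<le> CL * h2_norm (S x)"
    using L(2) CL SH by metis
  have ordS: "S x \<in> zpow_H2 (Suc k)" if x: "x \<in> zpow_H2 k" for k x
  proof -
    have xH: "x \<in> H2" using x by (simp add: zpow_H2_def)
    have "F x \<in> zpow_poly (k + 1)" using Fp x by blast
    hence f0: "\<forall>j<Suc k. F x j = 0" by (simp add: zpow_poly_def)
    have m0: "\<forall>j<Suc k. Mz x j = 0"
    proof (intro allI impI)
      fix j assume j: "j < Suc k"
      show "Mz x j = 0"
      proof (cases j)
        case 0 thus ?thesis by simp
      next
        case (Suc i) thus ?thesis using x j by (simp add: zpow_H2_def)
      qed
    qed
    show ?thesis using SH[OF xH] f0 m0 unfolding zpow_H2_def S_def by auto
  qed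
  have tailS: "S x = Mz x" if x: "x \<in> zpow_H2 n" for x
    unfolding S_def using F_tail[OF F Fz x] by simp
  have Minv: "S ` M \<subseteq> M" using assms(5) unfolding S_def .
  interpret pert S n M "1 + CF" CL
    by (unfold_locales) (use linS bndS belS ordS tailS assms(3) Minv assms(4) in auto)
  show ?thesis using dim_one_OD unfolding S_def .
qed


end
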